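(* Let $r_1,r_2,r_3,L>0$ with $r_2>\max(r_1,r_3)$. Let $m(y)=r_1\mathbf 1_{y<0}+r_2\mathbf 1_{0\le y<1}+r_3\mathbf 1_{1\le y}$ and $\mathcal L=L^{-2}\frac{d^2}{dy^2}+m$. Define the generalized principal eigenvalue $$\lambda_1=\sup\{\lambda\in\mathbb{R} : \exists\,\varphi\in W^{2,1}_{\mathrm{loc}}(\mathbb{R}),\ \varphi>0,\ (\mathcal L+\lambda)\varphi\le0\}.$$ Let $\underline{L}=0$ if $r_1=r_3$ and $\underline{L}=\frac{1}{\sqrt{r_2-\max(r_1,r_3)}}\operatorname{arccot}\big(\sqrt{\frac{r_2-\max(r_1,r_3)}{|r_1-r_3|}}\big)$ if $r_1\ne r_3$, where $\operatorname{arccot}$ is the inverse of $\cot|_{(0,\pi)}$. Then: (i) if $L\le\underline{L}$, then $\lambda_1=-\max(r_1,r_3)$; (ii) if $L>\underline{L}$, then $\lambda_1$ is the unique zero of the function $$\lambda\in(-r_2,\overline{\lambda})\mapsto\cot\big(L\sqrt{r_2+\lambda}\big)-\frac{r_2+\lambda-\sqrt{(r_1+\lambda)(r_3+\lambda)}}{\sqrt{r_2+\lambda}\big(\sqrt{-r_1-\lambda}+\sqrt{-r_3-\lambda}\big)},$$ where $\overline{\lambda}=\min\big(-\max(r_1,r_3),\frac{\pi^2}{L^2}-r_2\big)$. *)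

theory Defs
  imports "HOL-Analysis.Analysis"
begin

definition mcoef :: "real \<Rightarrow> real \<Rightarrow> real \<Rightarrow> real \<Rightarrow> real" where
  "mcoef r1 r2 r3 y = (if y < 0 then r1 else if y < 1 then r2 else r3)"

text \<open>phi in W^{2,1}_loc(R) (one-dimensional): phi is differentiable with derivative dphi,
  and dphi is locally absolutely continuous with weak derivative ddphi in L^1_loc,
  i.e. dphi b - dphi a is the integral of ddphi over [a,b].\<close>
definition W21loc :: "(real \<Rightarrow> real) \<Rightarrow> (real \<Rightarrow> real) \<Rightarrow> (real \<Rightarrow> real) \<Rightarrow> bool" where
  "W21loc phi dphi ddphi \<longleftrightarrow>
     (\<forall>x. (phi has_real_derivative dphi x) (at x)) \<and>
     (\<forall>a b. ddphi absolutely_integrable_on {a..b}) \<and>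
     (\<forall>a b. a \<le> b \<longrightarrow> (ddphi has_integral (dphi b - dphi a)) {a..b})"

definition gen_princ_eig :: "real \<Rightarrow> (real \<Rightarrow> real) \<Rightarrow> real" where
  "gen_princ_eig L m = Sup {lam. \<exists>phi dphi ddphi. W21loc phi dphi ddphi \<and> (\<forall>y. phi y > 0) \<and>
       (AE y in lborel. ddphi y / L\<^sup>2 + m y * phi y + lam * phi y \<le> 0)}"

definition arccot :: "real \<Rightarrow> real" where
  "arccot x = (THE t. 0 < t \<and> t < pi \<and> cot t = x)"

definition Lunder :: "real \<Rightarrow> real \<Rightarrow> real \<Rightarrow> real" where
  "Lunder r1 r2 r3 = (if r1 = r3 then 0 else
     1 / sqrt (r2 - max r1 r3) * arccot (sqrt ((r2 - max r1 r3) / \<bar>r1 - r3\<bar>)))"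

definition lam_bar :: "real \<Rightarrow> real \<Rightarrow> real \<Rightarrow> real \<Rightarrow> real" where
  "lam_bar r1 r2 r3 L = min (- max r1 r3) (pi\<^sup>2 / L\<^sup>2 - r2)"

definition Fdisp :: "real \<Rightarrow> real \<Rightarrow> real \<Rightarrow> real \<Rightarrow> real \<Rightarrow> real" where
  "Fdisp r1 r2 r3 L lam = cot (L * sqrt (r2 + lam)) -
     (r2 + lam - sqrt ((r1 + lam) * (r3 + lam))) /
     (sqrt (r2 + lam) * (sqrt (- r1 - lam) + sqrt (- r3 - lam)))"

end

theory Submission
  imports Defs
begin

lemma pw_deriv:
  fixes f g f' g' :: "real \<Rightarrow> real"
  assumes "\<And>x. (f has_real_derivative f' x) (at x)" "\<And>x. (g has_real_derivative g' x) (at x)"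
    "f c = g c" "f' c = g' c"
  shows "((\<lambda>y. if y < c then f y else g y) has_real_derivative (if x < c then f' x else g' x)) (at x)"
proof -
  have cS: "closure {..<c} = {..c}" by simp
  have cT: "closure {c..} = {c..}" by simp
  have "((\<lambda>y. if y \<in> {..<c} then f y else g y) has_vector_derivative
      (if x \<in> {..<c} then f' x else g' x)) (at x within UNIV)"
    apply (rule has_vector_derivative_If_within_closures[where S="{..<c}" and T="{c..}"])
    using assms by (auto simp: cS cT has_real_derivative_iff_has_vector_derivative[symmetric]
        intro: has_field_derivative_at_within)
  then show ?thesis by (simp add: has_real_derivative_iff_has_vector_derivative)
qed

lemma ftc_simple:
  fixes v g :: "real \<Rightarrow> real"
  assumes "\<And>x. (v has_real_derivative g x) (at x)" "x0 \<le> x"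
  shows "(g has_integral (v x - v x0)) {x0..x}"
  apply (rule fundamental_theorem_of_calculus[OF assms(2)])
  using assms(1) by (auto simp: has_real_derivative_iff_has_vector_derivative[symmetric]
        intro: has_field_derivative_at_within)

lemma touch:
  fixes w w' G :: "real \<Rightarrow> real"
  assumes "p < x0" "x0 < q" "\<forall>y\<in>{p..q}. 0 \<le> w y" "w x0 = 0"
    "\<forall>y\<in>{p..q}. (w has_real_derivative w' y) (at y)"
    "continuous_on {x0..q} G" "G x0 < 0"
    "\<forall>x\<in>{x0<..q}. \<exists>I. (G has_integral I) {x0..x} \<and> w' x - w' x0 \<le> I"
  shows False
proof -
  have w0: "w' x0 = 0"
  proof (rule DERIV_local_min)
    show "(w has_real_derivative w' x0) (at x0)" using assms by auto
    show "0 < min (x0 - p) (q - x0)" using assms by auto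
    show "\<forall>y. \<bar>x0 - y\<bar> < min (x0 - p) (q - x0) \<longrightarrow> w x0 \<le> w y"
    proof (intro allI impI)
      fix y assume "\<bar>x0 - y\<bar> < min (x0 - p) (q - x0)"
      then have "y \<in> {p..q}" by (auto simp: abs_less_iff)
      then show "w x0 \<le> w y" using assms(3,4) by auto
    qed
  qed
  obtain d where d: "d > 0" "\<forall>y\<in>{x0..q}. dist y x0 < d \<longrightarrow> dist (G y) (G x0) < - G x0 / 2"
    using assms(6,7) unfolding continuous_on_iff
    by (metis assms(2) atLeastAtMost_iff divide_pos_pos less_eq_real_def neg_0_less_iff_less zero_less_numeral)
  define x1 where "x1 = min (x0 + d/2) q"
  have x1: "x0 < x1" "x1 \<le> q" "x1 < x0 + d" using d assms unfolding x1_def by auto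
  have Gle: "G y \<le> G x0 / 2" if "y \<in> {x0..x1}" for y
  proof -
    have "dist (G y) (G x0) < - G x0 / 2" using d that x1 by (auto simp: dist_real_def)
    then show ?thesis by (auto simp: dist_real_def)
  qed
  have neg: "w' x < 0" if "x \<in> {x0<..x1}" for x
  proof -
    have "x \<in> {x0<..q}" using that x1 by auto
    then obtain I where I: "(G has_integral I) {x0..x}" "w' x - w' x0 \<le> I"
      using assms(8) by blast
    have "I \<le> (x - x0) * (G x0 / 2)"
      using has_integral_le[OF I(1) has_integral_const_real[of "G x0 / 2" x0 x]] Gle that
      by auto
    also have "\<dots> < 0" using that assms(7) by (auto intro: mult_pos_neg)
    finally show ?thesis using I w0 by linarith
  qed
  obtain z where z: "x0 < z" "z < x1" "w x1 - w x0 = (x1 - x0) * w' z"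
    using MVT2[OF x1(1), of w w'] assms(1,5) x1 by auto
  have "w x1 < 0" using z neg[of z] x1 assms(4) by (simp add: mult_pos_neg)
  moreover have "x1 \<in> {p..q}" using x1 assms(1) by auto
  ultimately show False using assms(3) by force
qed

definition Dsup :: "real \<Rightarrow> real \<Rightarrow> real \<Rightarrow> real \<Rightarrow> real \<Rightarrow> (real \<Rightarrow> real) \<Rightarrow> (real \<Rightarrow> real) \<Rightarrow> bool" where
  "Dsup r1 r2 r3 L lam phi dphi \<longleftrightarrow> (\<forall>y. 0 < phi y) \<and> (\<forall>x. (phi has_real_derivative dphi x) (at x)) \<and>
    (\<forall>a b. a \<le> b \<longrightarrow> (\<exists>I. ((\<lambda>y. - (L^2) * (mcoef r1 r2 r3 y + lam) * phi y) has_integral I) {a..b}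
        \<and> dphi b - dphi a \<le> I))"

lemma int_mcoef:
  fixes f :: "real \<Rightarrow> real"
  assumes "continuous_on UNIV f"
  shows "(\<lambda>y. mcoef r1 r2 r3 y * f y) integrable_on {a..b}"
proof -
  have eq: "(\<lambda>y. mcoef r1 r2 r3 y * f y) = (\<lambda>y. r1 * f y + ((if y \<in> {0..} then (r2 - r1) * f y else 0)
     + (if y \<in> {1..} then (r3 - r2) * f y else 0)))"
    by (auto simp: mcoef_def fun_eq_iff algebra_simps)
  have c: "continuous_on {c..d} f" for c d using assms by (rule continuous_on_subset) auto
  have i1: "(\<lambda>y. r1 * f y) integrable_on {a..b}"
    by (intro integrable_continuous_real continuous_intros c)
  have "(\<lambda>y. (r2 - r1) * f y) integrable_on ({0..} \<inter> {a..b})"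
  proof -
    have "{0..} \<inter> {a..b} = {max 0 a..b}" by auto
    then show ?thesis by (metis c integrable_continuous_real continuous_on_mult_left)
  qed
  then have i2: "(\<lambda>y. if y \<in> {0..} then (r2 - r1) * f y else 0) integrable_on {a..b}"
    by (rule integrable_restrict_Int[THEN iffD2])
  have "(\<lambda>y. (r3 - r2) * f y) integrable_on ({1..} \<inter> {a..b})"
  proof -
    have "{1..} \<inter> {a..b} = {max 1 a..b}" by auto
    then show ?thesis by (metis c integrable_continuous_real continuous_on_mult_left)
  qed
  then have i3: "(\<lambda>y. if y \<in> {1..} then (r3 - r2) * f y else 0) integrable_on {a..b}"
    by (rule integrable_restrict_Int[THEN iffD2])
  show ?thesis unfolding eq by (intro integrable_add i1 i2 i3)
qed

lemma int_mcoef2: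
  fixes f :: "real \<Rightarrow> real"
  assumes "continuous_on UNIV f"
  shows "(\<lambda>y. - (L^2) * (mcoef r1 r2 r3 y + lam) * f y) integrable_on {a..b}"
proof -
  have eq: "(\<lambda>y. - (L^2) * (mcoef r1 r2 r3 y + lam) * f y) = (\<lambda>y. (- (L^2)) * (mcoef r1 r2 r3 y * f y) + (- (L^2) * lam) * f y)"
    by (auto simp: fun_eq_iff algebra_simps)
  have c: "continuous_on {a..b} f" using assms by (rule continuous_on_subset) auto
  have i1: "(\<lambda>y. (- (L^2)) * (mcoef r1 r2 r3 y * f y)) integrable_on {a..b}"
    using integrable_on_cmult_left[OF int_mcoef[OF assms], of "- (L^2)"] by simp
  have i2: "(\<lambda>y. (- (L^2) * lam) * f y) integrable_on {a..b}"
    using integrable_on_cmult_left[OF integrable_continuous_real[OF c], of "- (L^2) * lam"] by simp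
  show ?thesis unfolding eq by (rule integrable_add[OF i1 i2])
qed

lemma deriv_cont:
  assumes "\<forall>x. (phi has_real_derivative dphi x) (at x)"
  shows "continuous_on S phi"
  using assms DERIV_isCont continuous_at_imp_continuous_on by blast

lemma set_to_D:
  assumes W: "W21loc phi dphi ddphi" and pos: "\<forall>y. 0 < phi y"
    and AE: "AE y in lborel. ddphi y / L^2 + mcoef r1 r2 r3 y * phi y + lam * phi y \<le> 0"
    and L: "L \<noteq> 0"
  shows "Dsup r1 r2 r3 L lam phi dphi"
proof -
  have der: "\<forall>x. (phi has_real_derivative dphi x) (at x)" using W unfolding W21loc_def by auto
  have cont: "continuous_on UNIV phi" using deriv_cont[OF der] .
  obtain N where N: "{y \<in> space lborel. \<not> (ddphi y / L^2 + mcoef r1 r2 r3 y * phi y + lam * phi y \<le> 0)} \<subseteq> N"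
    "emeasure lborel N = 0" "N \<in> sets lborel"
    using AE by (auto elim!: AE_E)
  have "N \<in> null_sets lborel" using N by (auto simp: null_sets_def)
  then have negN: "negligible N"
    unfolding negligible_iff_null_sets by (rule null_sets_completionI)
  have L2: "L^2 > 0" using L by auto
  have le: "ddphi y \<le> - (L^2) * (mcoef r1 r2 r3 y + lam) * phi y" if "y \<notin> N" for y
  proof -
    have "ddphi y / L^2 + mcoef r1 r2 r3 y * phi y + lam * phi y \<le> 0" using N(1) that by auto
    then have "L^2 * (ddphi y / L^2 + mcoef r1 r2 r3 y * phi y + lam * phi y) \<le> 0"
      using L2 by (simp add: mult_nonneg_nonpos)
    then show ?thesis using L2 by (simp add: algebra_simps)
  qed
  have "\<exists>I. ((\<lambda>y. - (L^2) * (mcoef r1 r2 r3 y + lam) * phi y) has_integral I) {a..b} \<and> dphi b - dphi a \<le> I"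
    if ab: "a \<le> b" for a b
  proof -
    let ?h = "\<lambda>y. - (L^2) * (mcoef r1 r2 r3 y + lam) * phi y"
    have hi: "?h integrable_on {a..b}" by (rule int_mcoef2[OF cont])
    have dd: "(ddphi has_integral (dphi b - dphi a)) {a..b}" using W ab unfolding W21loc_def by auto
    have g: "((\<lambda>y. min (ddphi y) (?h y)) has_integral (dphi b - dphi a)) {a..b}"
      by (rule has_integral_spike[OF negN _ dd]) (use le in \<open>auto simp: min_def\<close>)
    have "dphi b - dphi a \<le> integral {a..b} ?h"
      by (rule has_integral_le[OF g integrable_integral[OF hi]]) auto
    then show ?thesis using hi by blast
  qed
  then show ?thesis unfolding Dsup_def using pos der by blast
qed

lemma mcoef_bound: "\<bar>mcoef r1 r2 r3 y\<bar> \<le> \<bar>r1\<bar> + \<bar>r2\<bar> + \<bar>r3\<bar>"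
  by (auto simp: mcoef_def)

lemma cmp:
  assumes D: "Dsup r1 r2 r3 L lam phi dphi"
    and lohi: "lo < hi" and mu: "mu < lam" and L: "L \<noteq> 0"
    and vd: "\<forall>x. (v has_real_derivative dv x) (at x)"
    and vi: "\<forall>x0 x. lo \<le> x0 \<longrightarrow> x0 \<le> x \<longrightarrow> x \<le> hi \<longrightarrow>
       ((\<lambda>y. - (L^2) * (mcoef r1 r2 r3 y + mu) * v y) has_integral (dv x - dv x0)) {x0..x}"
    and vlo: "v lo \<le> phi lo" and vhi: "v hi \<le> phi hi"
  shows "\<forall>y\<in>{lo..hi}. v y \<le> phi y"
proof (rule ccontr)
  assume "\<not> ?thesis"
  then obtain y0 where y0: "y0 \<in> {lo..hi}" "v y0 > phi y0" by auto
  have pos: "\<forall>y. 0 < phi y" and der: "\<forall>x. (phi has_real_derivative dphi x) (at x)"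
    and int: "\<forall>a b. a \<le> b \<longrightarrow> (\<exists>I. ((\<lambda>y. - (L^2) * (mcoef r1 r2 r3 y + lam) * phi y) has_integral I) {a..b}
        \<and> dphi b - dphi a \<le> I)" using D unfolding Dsup_def by auto
  have cphi: "continuous_on S phi" for S using deriv_cont[OF der] .
  have cv: "continuous_on S v" for S using deriv_cont[OF vd] .
  have cR: "continuous_on {lo..hi} (\<lambda>y. v y / phi y)"
    using pos by (intro continuous_intros cphi cv) (auto simp: less_imp_neq[symmetric])
  obtain x0 where x0: "x0 \<in> {lo..hi}" "\<forall>y\<in>{lo..hi}. v y / phi y \<le> v x0 / phi x0"
    using continuous_attains_sup[OF compact_Icc _ cR] lohi by auto
  define M where "M = v x0 / phi x0"
  have "1 < v y0 / phi y0" using y0 pos by (simp add: less_divide_eq)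
  then have M1: "1 < M" using x0 y0 unfolding M_def by force
  define t where "t = 1 / M"
  have t: "0 < t" "t < 1" using M1 unfolding t_def by auto
  have tv: "t * v y \<le> phi y" if "y \<in> {lo..hi}" for y
  proof -
    have "v y / phi y \<le> M" using x0 that unfolding M_def by auto
    then have "v y \<le> M * phi y" using pos by (simp add: divide_le_eq)
    then show ?thesis using M1 unfolding t_def by (simp add: divide_le_eq mult.commute)
  qed
  have vx0: "v x0 = M * phi x0" using pos unfolding M_def by (simp add: less_imp_neq[symmetric])
  have tx0: "t * v x0 = phi x0" using vx0 M1 unfolding t_def by auto
  have vgt: "v x0 > phi x0" using vx0 M1 pos by (simp add: less_imp_neq[symmetric])
  have vpos: "v x0 > 0" using vgt pos by (meson less_trans)
  have x0i: "lo < x0" "x0 < hi" using x0 vgt vlo vhi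
    by (metis atLeastAtMost_iff not_le order.order_iff_strict)+
  define w where "w = (\<lambda>y. phi y - t * v y)"
  define w' where "w' = (\<lambda>y. dphi y - t * dv y)"
  define q where "q = (x0 + hi) / 2"
  define B where "B = \<bar>r1\<bar> + \<bar>r2\<bar> + \<bar>r3\<bar>"
  define K where "K = L^2 * (B + \<bar>lam\<bar>)"
  define G where "G = (\<lambda>y. K * \<bar>w y\<bar> - t * L^2 * (lam - mu) * v y)"
  have L2: "L^2 > 0" using L by auto
  have q: "x0 < q" "q < hi" using x0i unfolding q_def by auto
  show False
  proof (rule touch[of lo x0 q w w' G])
    show "lo < x0" "x0 < q" using x0i q by auto
    show "\<forall>y\<in>{lo..q}. 0 \<le> w y" using tv q unfolding w_def by auto
    show "w x0 = 0" using tx0 unfolding w_def by auto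
    show "\<forall>y\<in>{lo..q}. (w has_real_derivative w' y) (at y)"
      unfolding w_def w'_def using der vd by (auto intro!: derivative_eq_intros)
    show "continuous_on {x0..q} G" unfolding G_def w_def by (intro continuous_intros cphi cv)
    show "G x0 < 0" using tx0 t L2 mu vpos unfolding G_def w_def by (simp add: mult_pos_pos)
    show "\<forall>x\<in>{x0<..q}. \<exists>I. (G has_integral I) {x0..x} \<and> w' x - w' x0 \<le> I"
    proof
      fix x assume xx: "x \<in> {x0<..q}"
      then have xle: "x0 \<le> x" "x \<le> hi" using q by auto
      obtain I1 where I1: "((\<lambda>y. - (L^2) * (mcoef r1 r2 r3 y + lam) * phi y) has_integral I1) {x0..x}"
        "dphi x - dphi x0 \<le> I1" using int xle by blast
      have Iv: "((\<lambda>y. - (L^2) * (mcoef r1 r2 r3 y + mu) * v y) has_integral (dv x - dv x0)) {x0..x}"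
        using vi x0i xle by auto
      have IH: "((\<lambda>y. - (L^2) * (mcoef r1 r2 r3 y + lam) * phi y - t * (- (L^2) * (mcoef r1 r2 r3 y + mu) * v y))
          has_integral (I1 - t * (dv x - dv x0))) {x0..x}"
        by (intro has_integral_diff I1(1) has_integral_mult_right Iv)
      have cG: "continuous_on {x0..x} G" unfolding G_def w_def by (intro continuous_intros cphi cv)
      have IG: "(G has_integral integral {x0..x} G) {x0..x}"
        by (rule integrable_integral[OF integrable_continuous_real[OF cG]])
      have ptw: "- (L^2) * (mcoef r1 r2 r3 y + lam) * phi y - t * (- (L^2) * (mcoef r1 r2 r3 y + mu) * v y) \<le> G y"
        for y
      proof -
        have eq: "- (L^2) * (mcoef r1 r2 r3 y + lam) * phi y - t * (- (L^2) * (mcoef r1 r2 r3 y + mu) * v y)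
           = - (L^2 * (mcoef r1 r2 r3 y + lam) * w y) - t * L^2 * (lam - mu) * v y"
          unfolding w_def by (simp add: algebra_simps)
        have mb: "\<bar>mcoef r1 r2 r3 y + lam\<bar> \<le> B + \<bar>lam\<bar>"
          using mcoef_bound[of r1 r2 r3 y] unfolding B_def by linarith
        have "- (L^2 * (mcoef r1 r2 r3 y + lam) * w y) \<le> \<bar>L^2 * (mcoef r1 r2 r3 y + lam) * w y\<bar>"
          by (rule abs_ge_minus_self)
        also have "\<dots> = L^2 * \<bar>mcoef r1 r2 r3 y + lam\<bar> * \<bar>w y\<bar>" by (simp add: abs_mult)
        also have "\<dots> \<le> L^2 * (B + \<bar>lam\<bar>) * \<bar>w y\<bar>"
          using mb L2 by (intro mult_right_mono mult_left_mono) auto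
        finally show ?thesis unfolding eq G_def K_def by linarith
      qed
      have "I1 - t * (dv x - dv x0) \<le> integral {x0..x} G"
        by (rule has_integral_le[OF IH IG]) (use ptw in auto)
      moreover have "w' x - w' x0 \<le> I1 - t * (dv x - dv x0)" using I1(2) unfolding w'_def by argo
      ultimately show "\<exists>I. (G has_integral I) {x0..x} \<and> w' x - w' x0 \<le> I" using IG by force
    qed
  qed
qed

lemma build:
  fixes f1 f2 f3 g1 g2 g3 :: "real \<Rightarrow> real"
  assumes d1: "\<And>x. (f1 has_real_derivative g1 x) (at x)"
    and d2: "\<And>x. (f2 has_real_derivative g2 x) (at x)"
    and d3: "\<And>x. (f3 has_real_derivative g3 x) (at x)"
    and dd1: "\<And>x. (g1 has_real_derivative (- (L^2) * (r1 + lam) * f1 x)) (at x)"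
    and dd2: "\<And>x. (g2 has_real_derivative (- (L^2) * (r2 + lam) * f2 x)) (at x)"
    and dd3: "\<And>x. (g3 has_real_derivative (- (L^2) * (r3 + lam) * f3 x)) (at x)"
    and m0: "f1 0 = f2 0" "g1 0 = g2 0" and m1: "f2 1 = f3 1" "g2 1 = g3 1"
    and p1: "\<And>x. x < 0 \<Longrightarrow> 0 < f1 x" and p2: "\<And>x. 0 \<le> x \<Longrightarrow> x < 1 \<Longrightarrow> 0 < f2 x"
    and p3: "\<And>x. 1 \<le> x \<Longrightarrow> 0 < f3 x"
  shows "\<exists>psi dpsi. (\<forall>y. 0 < psi y) \<and> (\<forall>y. (psi has_real_derivative dpsi y) (at y)) \<and>
     (\<forall>x0 x. x0 \<le> x \<longrightarrow> ((\<lambda>y. - (L^2) * (mcoef r1 r2 r3 y + lam) * psi y) has_integral (dpsi x - dpsi x0)) {x0..x}) \<and>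
     (\<forall>y<0. psi y = f1 y) \<and> (\<forall>y\<ge>1. psi y = f3 y) \<and> psi 0 = f2 0"
proof -
  define h where "h = (\<lambda>y. if y < 1 then f2 y else f3 y)"
  define dh where "dh = (\<lambda>y. if y < 1 then g2 y else g3 y)"
  define psi where "psi = (\<lambda>y. if y < 0 then f1 y else h y)"
  define dpsi where "dpsi = (\<lambda>y. if y < 0 then g1 y else dh y)"
  define ddpsi where "ddpsi = (\<lambda>y. - (L^2) * (mcoef r1 r2 r3 y + lam) * psi y)"
  have hder: "(h has_real_derivative dh x) (at x)" for x
    unfolding h_def dh_def by (rule pw_deriv[OF d2 d3 m1])
  have psider: "(psi has_real_derivative dpsi x) (at x)" for x
    unfolding psi_def dpsi_def by (rule pw_deriv[OF d1 hder]) (auto simp: h_def dh_def m0)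
  have cg1: "continuous_on UNIV g1" by (rule deriv_cont) (use dd1 in auto)
  have cg2: "continuous_on UNIV g2" by (rule deriv_cont) (use dd2 in auto)
  have cg3: "continuous_on UNIV g3" by (rule deriv_cont) (use dd3 in auto)
  have dpsi_eq: "dpsi = (\<lambda>y. g1 (min y 0) - g1 0 + g2 (max 0 (min y 1)) + g3 (max y 1) - g3 1)"
    unfolding dpsi_def dh_def using m0 m1 by (auto simp: fun_eq_iff min_def max_def)
  have cdpsi: "continuous_on S dpsi" for S
    unfolding dpsi_eq
    by (intro continuous_intros continuous_on_compose2[OF cg1] continuous_on_compose2[OF cg2]
        continuous_on_compose2[OF cg3]) auto
  have dd: "(dpsi has_real_derivative ddpsi x) (at x)" if xx: "x \<notin> {0, 1}" for x
  proof -
    have "x \<noteq> 0" "x \<noteq> 1" using xx by auto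
    have c1: ?thesis if "x < 0"
    proof -
      have e: "ddpsi x = - (L^2) * (r1 + lam) * f1 x" using that by (simp add: ddpsi_def psi_def mcoef_def)
      show ?thesis unfolding e
        by (rule has_field_derivative_transform_within_open[OF dd1, where a=x and S="{..<0}"])
          (use that in \<open>auto simp: dpsi_def mcoef_def\<close>)
    qed
    have c2: ?thesis if "0 < x" "x < 1"
    proof -
      have e: "ddpsi x = - (L^2) * (r2 + lam) * f2 x" using that by (simp add: ddpsi_def psi_def mcoef_def h_def dh_def)
      show ?thesis unfolding e
        by (rule has_field_derivative_transform_within_open[OF dd2, where a=x and S="{0<..<1}"])
          (use that in \<open>auto simp: dpsi_def mcoef_def h_def dh_def\<close>)
    qed
    have c3: ?thesis if "1 < x"
    proof -
      have e: "ddpsi x = - (L^2) * (r3 + lam) * f3 x" using that by (simp add: ddpsi_def psi_def mcoef_def h_def dh_def)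
      show ?thesis unfolding e
        by (rule has_field_derivative_transform_within_open[OF dd3, where a=x and S="{1<..}"])
          (use that in \<open>auto simp: dpsi_def mcoef_def h_def dh_def\<close>)
    qed
    show ?thesis
    proof (cases "x < 0")
      case True then show ?thesis by (rule c1)
    next
      case False
      then have "0 < x" using \<open>x \<noteq> 0\<close> by simp
      show ?thesis
      proof (cases "x < 1")
        case True then show ?thesis using c2 \<open>0 < x\<close> by blast
      next
        case False then have "1 < x" using \<open>x \<noteq> 1\<close> by simp
        then show ?thesis by (rule c3)
      qed
    qed
  qed
  have ftc: "(ddpsi has_integral (dpsi x - dpsi x0)) {x0..x}" if "x0 \<le> x" for x0 x
    apply (rule fundamental_theorem_of_calculus_interior_strong[of "{0,1}"])
    using that dd cdpsi by (auto simp: has_real_derivative_iff_has_vector_derivative[symmetric])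
  have pos: "0 < psi y" for y
    unfolding psi_def h_def using p1 p2 p3 by auto
  show ?thesis
    apply (rule exI[of _ psi], rule exI[of _ dpsi])
    using pos psider ftc unfolding ddpsi_def
    by (auto simp: psi_def h_def)
qed

lemma in_set:
  assumes L: "L \<noteq> 0" and pos: "\<forall>y. 0 < psi y" and der: "\<forall>y. (psi has_real_derivative dpsi y) (at y)"
    and ftc: "\<forall>x0 x. x0 \<le> x \<longrightarrow> ((\<lambda>y. - (L^2) * (mcoef r1 r2 r3 y + lam) * psi y) has_integral (dpsi x - dpsi x0)) {x0..x}"
  shows "\<exists>phi dphi ddphi. W21loc phi dphi ddphi \<and> (\<forall>y. phi y > 0) \<and>
       (AE y in lborel. ddphi y / L\<^sup>2 + mcoef r1 r2 r3 y * phi y + lam * phi y \<le> 0)"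
proof -
  define ddpsi where "ddpsi = (\<lambda>y. - (L^2) * (mcoef r1 r2 r3 y + lam) * psi y)"
  have cpsi: "continuous_on S psi" for S using deriv_cont[OF der] .
  have ai: "ddpsi absolutely_integrable_on {a..b}" for a b
  proof -
    obtain C where C: "\<forall>y\<in>{a..b}. norm (psi y) \<le> C"
      using compact_imp_bounded[OF compact_continuous_image[OF cpsi compact_Icc]]
      unfolding bounded_iff by (auto simp: image_iff) blast
    define K where "K = L^2 * (\<bar>r1\<bar> + \<bar>r2\<bar> + \<bar>r3\<bar> + \<bar>lam\<bar>) * C"
    show ?thesis
    proof (rule absolutely_integrable_integrable_bound[where g="\<lambda>_. K"])
      show "norm (ddpsi y) \<le> K" if "y \<in> {a..b}" for y
      proof -
        have "norm (ddpsi y) = L^2 * \<bar>mcoef r1 r2 r3 y + lam\<bar> * \<bar>psi y\<bar>"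
          unfolding ddpsi_def by (simp add: abs_mult)
        also have "\<dots> \<le> L^2 * (\<bar>r1\<bar> + \<bar>r2\<bar> + \<bar>r3\<bar> + \<bar>lam\<bar>) * C"
          using mcoef_bound[of r1 r2 r3 y] C that
          by (intro mult_mono mult_left_mono) (auto simp: abs_mult)
        finally show ?thesis unfolding K_def .
      qed
      show "ddpsi integrable_on {a..b}" unfolding ddpsi_def by (rule int_mcoef2[OF cpsi])
      show "(\<lambda>_. K) integrable_on {a..b}" by (rule integrable_const_ivl)
    qed
  qed
  have W: "W21loc psi dpsi ddpsi"
    unfolding W21loc_def using der ai ftc unfolding ddpsi_def by auto
  have "ddpsi y / L\<^sup>2 + mcoef r1 r2 r3 y * psi y + lam * psi y \<le> 0" for y
  proof -
    have "ddpsi y / L\<^sup>2 = - (mcoef r1 r2 r3 y + lam) * psi y" unfolding ddpsi_def using L by (simp add: field_simps)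
    then show ?thesis by (simp add: algebra_simps)
  qed
  then show ?thesis using W pos by (intro exI[of _ psi] exI[of _ dpsi] exI[of _ ddpsi]) auto
qed

lemma no_bump:
  assumes D: "Dsup r1 r2 r3 L lam phi dphi" and L: "L \<noteq> 0"
    and om: "om > 0" "om^2 < L^2 * (r + lam)"
    and hm: "\<And>y. Y \<le> y \<Longrightarrow> y \<le> Y + pi / om \<Longrightarrow> mcoef r1 r2 r3 y = r"
  shows False
proof -
  define K where "K = phi (Y + pi / (2 * om)) + 1"
  define v where "v = (\<lambda>y. K * sin (om * (y - Y)))"
  define dv where "dv = (\<lambda>y. K * om * cos (om * (y - Y)))"
  define mu where "mu = om^2 / L^2 - r"
  have L2: "L^2 > 0" using L by auto
  have mu: "mu < lam" using om L2 unfolding mu_def by (simp add: divide_less_eq algebra_simps)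
  have vd: "\<forall>x. (v has_real_derivative dv x) (at x)"
    unfolding v_def dv_def by (auto intro!: derivative_eq_intros)
  have vdd: "(dv has_real_derivative (- (om^2) * v x)) (at x)" for x
    unfolding v_def dv_def by (auto intro!: derivative_eq_intros simp: power2_eq_square algebra_simps)
  have vi: "\<forall>x0 x. Y \<le> x0 \<longrightarrow> x0 \<le> x \<longrightarrow> x \<le> Y + pi / om \<longrightarrow>
       ((\<lambda>y. - (L^2) * (mcoef r1 r2 r3 y + mu) * v y) has_integral (dv x - dv x0)) {x0..x}"
  proof (intro allI impI)
    fix x0 x assume h: "Y \<le> x0" "x0 \<le> x" "x \<le> Y + pi / om"
    have "((\<lambda>y. - (om^2) * v y) has_integral (dv x - dv x0)) {x0..x}"
      by (rule ftc_simple[OF vdd h(2)])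
    then show "((\<lambda>y. - (L^2) * (mcoef r1 r2 r3 y + mu) * v y) has_integral (dv x - dv x0)) {x0..x}"
    proof (rule has_integral_spike_finite[of "{}", rotated 2])
      fix y assume "y \<in> {x0..x} - {}"
      then have "mcoef r1 r2 r3 y = r" using h hm by auto
      then show "- (L^2) * (mcoef r1 r2 r3 y + mu) * v y = - (om^2) * v y"
        unfolding mu_def using L2 by (simp add: field_simps)
    qed auto
  qed
  have lohi: "Y < Y + pi / om" using om by simp
  have pos: "\<forall>y. 0 < phi y" using D unfolding Dsup_def by auto
  have e: "om * (Y + pi / om - Y) = pi" using om by simp
  have "\<forall>y\<in>{Y..Y + pi / om}. v y \<le> phi y"
    by (rule cmp[OF D lohi mu L vd vi]) (use pos e in \<open>auto simp: v_def less_imp_le\<close>)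
  moreover have "Y + pi / (2 * om) \<in> {Y..Y + pi / om}" using om by (auto simp: field_simps)
  moreover have "v (Y + pi / (2 * om)) = K"
  proof -
    have h: "om * (Y + pi / (2 * om) - Y) = pi / 2" using om by (simp add: field_simps)
    show ?thesis unfolding v_def h by simp
  qed
  ultimately show False unfolding K_def by (metis add_le_same_cancel1 not_one_le_zero)
qed

lemma left_tail:
  assumes D: "Dsup r1 r2 r3 L lam phi dphi" and L: "L \<noteq> 0"
    and a2: "a2 > 0" "a2^2 > L^2 * (- r1 - lam)"
  shows "\<forall>y\<le>0. phi 0 / 2 * exp (a2 * y) \<le> phi y"
proof (intro allI impI)
  fix y :: real assume y: "y \<le> 0"
  define Y where "Y = y - ln 2 / (2 * a2)"
  define ep where "ep = phi 0"
  define v where "v = (\<lambda>z. ep * (exp (a2 * z) - exp (2 * a2 * Y) * exp (- a2 * z)))"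
  define dv where "dv = (\<lambda>z. ep * a2 * (exp (a2 * z) + exp (2 * a2 * Y) * exp (- a2 * z)))"
  define mu where "mu = - r1 - a2^2 / L^2"
  have L2: "L^2 > 0" using L by auto
  have "(- r1 - lam) * L^2 < a2^2" using a2(2) by (simp add: mult.commute)
  then have "- r1 - lam < a2^2 / L^2" using pos_less_divide_eq[OF L2] by blast
  then have mu: "mu < lam" unfolding mu_def by linarith
  have "0 < ln (2::real) / (2 * a2)" using a2 by (simp add: divide_pos_pos)
  then have Y: "Y < 0" "Y \<le> y" using y unfolding Y_def by auto
  have vd: "\<forall>x. (v has_real_derivative dv x) (at x)"
    unfolding v_def dv_def by (auto intro!: derivative_eq_intros simp: algebra_simps)
  have vdd: "(dv has_real_derivative (a2^2 * v x)) (at x)" for x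
    unfolding v_def dv_def by (auto intro!: derivative_eq_intros simp: power2_eq_square algebra_simps)
  have vi: "\<forall>x0 x. Y \<le> x0 \<longrightarrow> x0 \<le> x \<longrightarrow> x \<le> 0 \<longrightarrow>
       ((\<lambda>y. - (L^2) * (mcoef r1 r2 r3 y + mu) * v y) has_integral (dv x - dv x0)) {x0..x}"
  proof (intro allI impI)
    fix x0 x assume h: "Y \<le> x0" "x0 \<le> x" "x \<le> 0"
    have "((\<lambda>y. a2^2 * v y) has_integral (dv x - dv x0)) {x0..x}"
      by (rule ftc_simple[OF vdd h(2)])
    then show "((\<lambda>y. - (L^2) * (mcoef r1 r2 r3 y + mu) * v y) has_integral (dv x - dv x0)) {x0..x}"
    proof (rule has_integral_spike_finite[of "{0}", rotated 2])
      fix z assume "z \<in> {x0..x} - {0}"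
      then have "mcoef r1 r2 r3 z = r1" using h by (auto simp: mcoef_def)
      then show "- (L^2) * (mcoef r1 r2 r3 z + mu) * v z = a2^2 * v z"
        unfolding mu_def using L2 by (simp add: field_simps)
    qed auto
  qed
  have pos: "\<forall>y. 0 < phi y" using D unfolding Dsup_def by auto
  have vY: "v Y = 0" unfolding v_def by (simp add: exp_add[symmetric] algebra_simps)
  have v0: "v 0 \<le> phi 0" unfolding v_def ep_def using pos by (simp add: mult_le_cancel_left1)
  have "\<forall>z\<in>{Y..0}. v z \<le> phi z"
    by (rule cmp[OF D Y(1) mu L vd vi]) (use pos vY v0 in \<open>auto simp: less_imp_le\<close>)
  then have "v y \<le> phi y" using Y y by auto
  moreover have "v y = phi 0 / 2 * exp (a2 * y)"
  proof -
    have "exp (2 * a2 * Y) * exp (- a2 * y) = exp (a2 * y - ln 2)"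
      unfolding Y_def using a2 by (simp add: exp_add[symmetric] field_simps)
    also have "\<dots> = exp (a2 * y) / 2" by (simp add: exp_diff)
    finally show ?thesis unfolding v_def ep_def by (simp add: algebra_simps)
  qed
  ultimately show "phi 0 / 2 * exp (a2 * y) \<le> phi y" by simp
qed

lemma right_tail:
  assumes D: "Dsup r1 r2 r3 L lam phi dphi" and L: "L \<noteq> 0"
    and b2: "b2 > 0" "b2^2 > L^2 * (- r3 - lam)"
  shows "\<forall>y\<ge>1. phi 1 / 2 * exp (- b2 * (y - 1)) \<le> phi y"
proof (intro allI impI)
  fix y :: real assume y: "1 \<le> y"
  define Y where "Y = y + ln 2 / (2 * b2)"
  define ep where "ep = phi 1"
  define v where "v = (\<lambda>z. ep * (exp (- b2 * (z - 1)) - exp (- 2 * b2 * (Y - 1)) * exp (b2 * (z - 1))))"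
  define dv where "dv = (\<lambda>z. ep * (- b2 * exp (- b2 * (z - 1)) - b2 * exp (- 2 * b2 * (Y - 1)) * exp (b2 * (z - 1))))"
  define mu where "mu = - r3 - b2^2 / L^2"
  have L2: "L^2 > 0" using L by auto
  have "(- r3 - lam) * L^2 < b2^2" using b2(2) by (simp add: mult.commute)
  then have "- r3 - lam < b2^2 / L^2" using pos_less_divide_eq[OF L2] by blast
  then have mu: "mu < lam" unfolding mu_def by linarith
  have "0 < ln (2::real) / (2 * b2)" using b2 by (simp add: divide_pos_pos)
  then have Y: "1 < Y" "y \<le> Y" using y unfolding Y_def by auto
  have vd: "\<forall>x. (v has_real_derivative dv x) (at x)"
    unfolding v_def dv_def by (auto intro!: derivative_eq_intros simp: algebra_simps)
  have vdd: "(dv has_real_derivative (b2^2 * v x)) (at x)" for x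
    unfolding v_def dv_def by (auto intro!: derivative_eq_intros simp: power2_eq_square algebra_simps)
  have vi: "\<forall>x0 x. 1 \<le> x0 \<longrightarrow> x0 \<le> x \<longrightarrow> x \<le> Y \<longrightarrow>
       ((\<lambda>y. - (L^2) * (mcoef r1 r2 r3 y + mu) * v y) has_integral (dv x - dv x0)) {x0..x}"
  proof (intro allI impI)
    fix x0 x assume h: "1 \<le> x0" "x0 \<le> x" "x \<le> Y"
    have "((\<lambda>y. b2^2 * v y) has_integral (dv x - dv x0)) {x0..x}"
      by (rule ftc_simple[OF vdd h(2)])
    then show "((\<lambda>y. - (L^2) * (mcoef r1 r2 r3 y + mu) * v y) has_integral (dv x - dv x0)) {x0..x}"
    proof (rule has_integral_spike_finite[of "{}", rotated 2])
      fix z assume "z \<in> {x0..x} - {}"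
      then have "mcoef r1 r2 r3 z = r3" using h by (auto simp: mcoef_def)
      then show "- (L^2) * (mcoef r1 r2 r3 z + mu) * v z = b2^2 * v z"
        unfolding mu_def using L2 by (simp add: field_simps)
    qed auto
  qed
  have pos: "\<forall>y. 0 < phi y" using D unfolding Dsup_def by auto
  have vY: "v Y = 0" unfolding v_def by (simp add: exp_add[symmetric] algebra_simps)
  have v1: "v 1 \<le> phi 1" unfolding v_def ep_def using pos by (simp add: mult_le_cancel_left1)
  have "\<forall>z\<in>{1..Y}. v z \<le> phi z"
    by (rule cmp[OF D Y(1) mu L vd vi]) (use pos vY v1 in \<open>auto simp: less_imp_le\<close>)
  then have "v y \<le> phi y" using Y y by auto
  moreover have "v y = phi 1 / 2 * exp (- b2 * (y - 1))"
  proof -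
    have "exp (- 2 * b2 * (Y - 1)) * exp (b2 * (y - 1)) = exp (- b2 * (y - 1) - ln 2)"
      unfolding Y_def using b2 by (simp add: exp_add[symmetric] field_simps)
    also have "\<dots> = exp (- b2 * (y - 1)) / 2" by (simp add: exp_diff)
    finally show ?thesis unfolding v_def ep_def by (simp add: algebra_simps)
  qed
  ultimately show "phi 1 / 2 * exp (- b2 * (y - 1)) \<le> phi y" by simp
qed

lemma sqrt_between:
  fixes m A :: real
  assumes "m < A" "0 < A"
  shows "0 < sqrt ((max 0 m + A) / 2)" "sqrt ((max 0 m + A) / 2) < sqrt A"
    "m < (sqrt ((max 0 m + A) / 2))^2"
proof -
  have p: "0 < (max 0 m + A) / 2" using assms by auto
  show "0 < sqrt ((max 0 m + A) / 2)" using p by simp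
  show "sqrt ((max 0 m + A) / 2) < sqrt A" using assms by (simp add: max_def)
  show "m < (sqrt ((max 0 m + A) / 2))^2" using p assms by (simp add: max_def)
qed

lemma no_above_eig:
  assumes D: "Dsup r1 r2 r3 L lam phi dphi" and L: "L > 0"
    and pp: "\<forall>y. 0 < psi y" and pd: "\<forall>y. (psi has_real_derivative dpsi y) (at y)"
    and pf: "\<forall>x0 x. x0 \<le> x \<longrightarrow> ((\<lambda>y. - (L^2) * (mcoef r1 r2 r3 y + lam') * psi y) has_integral (dpsi x - dpsi x0)) {x0..x}"
    and pl: "\<forall>y<0. psi y = exp (a * y)" and pr: "\<forall>y\<ge>1. psi y = C * exp (- b * (y - 1))" and p0: "psi 0 = 1"
    and ab: "a > 0" "b > 0" "a^2 = L^2 * (- r1 - lam')" "b^2 = L^2 * (- r3 - lam')" "C > 0" "lam' < lam"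
  shows False
proof -
  have L2: "L^2 > 0" using L by auto
  have ll: "L^2 * lam' < L^2 * lam" using ab(6) L2 by simp
  have m1: "L^2 * (- r1 - lam) < a^2" using ab(3) ll by (simp add: algebra_simps)
  have m3: "L^2 * (- r3 - lam) < b^2" using ab(4) ll by (simp add: algebra_simps)
  define a2 where "a2 = sqrt ((max 0 (L^2 * (- r1 - lam)) + a^2) / 2)"
  define b2 where "b2 = sqrt ((max 0 (L^2 * (- r3 - lam)) + b^2) / 2)"
  have Ap: "0 < a^2" "0 < b^2" using ab(1,2) by auto
  have sa: "sqrt (a^2) = a" "sqrt (b^2) = b" using ab(1,2) by auto
  note sA = sqrt_between[OF m1 Ap(1)]
  note sB = sqrt_between[OF m3 Ap(2)]
  have a2: "0 < a2" "a2 < a" "L^2 * (- r1 - lam) < a2^2"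
    using sA sa(1) unfolding a2_def by (simp_all only:)
  have b2: "0 < b2" "b2 < b" "L^2 * (- r3 - lam) < b2^2"
    using sB sa(2) unfolding b2_def by (simp_all only:)
  have pos: "\<forall>y. 0 < phi y" using D unfolding Dsup_def by auto
  have LT: "\<forall>y\<le>0. phi 0 / 2 * exp (a2 * y) \<le> phi y" using left_tail[OF D _ a2(1) a2(3)] L by auto
  have RT: "\<forall>y\<ge>1. phi 1 / 2 * exp (- b2 * (y - 1)) \<le> phi y" using right_tail[OF D _ b2(1) b2(3)] L by auto
  define e1 where "e1 = phi 0 / 2"
  define e3 where "e3 = phi 1 / 2"
  define K where "K = phi 0 + 1"
  have e1: "e1 > 0" and e3: "e3 > 0" and K: "K > 0" using pos unfolding e1_def e3_def K_def
    by (auto intro: add_pos_pos)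
  define lo where "lo = min (-1) (ln (e1 / K) / (a - a2))"
  define hi where "hi = max 2 (1 - ln (e3 / (K * C)) / (b - b2))"
  have lo: "lo < 0" unfolding lo_def by auto
  have hi: "hi > 1" unfolding hi_def by auto
  have vlo: "K * psi lo \<le> phi lo"
  proof -
    have "lo \<le> ln (e1 / K) / (a - a2)" unfolding lo_def by auto
    then have "(a - a2) * lo \<le> ln (e1 / K)" using a2 by (simp add: pos_le_divide_eq mult.commute)
    then have "exp ((a - a2) * lo) \<le> e1 / K" using e1 K
      by (metis divide_pos_pos exp_le_cancel_iff exp_ln)
    then have "K * exp ((a - a2) * lo) \<le> e1" using K by (simp add: le_divide_eq mult.commute)
    then have "K * exp ((a - a2) * lo) * exp (a2 * lo) \<le> e1 * exp (a2 * lo)"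
      by (simp add: mult_right_mono)
    moreover have "K * exp ((a - a2) * lo) * exp (a2 * lo) = K * psi lo"
      using pl lo by (simp add: mult.assoc exp_add[symmetric] algebra_simps)
    moreover have "phi 0 / 2 * exp (a2 * lo) \<le> phi lo" using LT lo by simp
    ultimately show ?thesis unfolding e1_def by linarith
  qed
  have vhi: "K * psi hi \<le> phi hi"
  proof -
    have "1 - ln (e3 / (K * C)) / (b - b2) \<le> hi" unfolding hi_def by auto
    then have "(- ln (e3 / (K * C))) / (b - b2) \<le> hi - 1" by simp
    moreover have "- ln (e3 / (K * C)) = ((- ln (e3 / (K * C))) / (b - b2)) * (b - b2)" using b2 by simp
    ultimately have "- ln (e3 / (K * C)) \<le> (hi - 1) * (b - b2)" using b2
      by (metis diff_gt_0_iff_gt less_eq_real_def mult_right_mono)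
    then have "- (b - b2) * (hi - 1) \<le> ln (e3 / (K * C))" by (simp add: algebra_simps)
    then have "exp (- (b - b2) * (hi - 1)) \<le> e3 / (K * C)" using e3 K ab
      by (metis divide_pos_pos exp_le_cancel_iff exp_ln mult_pos_pos)
    then have "(K * C) * exp (- (b - b2) * (hi - 1)) \<le> e3" using K ab
      by (simp add: le_divide_eq mult.commute)
    then have "(K * C) * exp (- (b - b2) * (hi - 1)) * exp (- b2 * (hi - 1)) \<le> e3 * exp (- b2 * (hi - 1))"
      by (simp add: mult_right_mono)
    moreover have "(K * C) * exp (- (b - b2) * (hi - 1)) * exp (- b2 * (hi - 1)) = K * psi hi"
      using pr hi by (simp add: mult.assoc exp_add[symmetric] algebra_simps)
    moreover have "phi 1 / 2 * exp (- b2 * (hi - 1)) \<le> phi hi" using RT hi by simp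
    ultimately show ?thesis unfolding e3_def by linarith
  qed
  have vd: "\<forall>x. ((\<lambda>y. K * psi y) has_real_derivative K * dpsi x) (at x)"
    using pd by (auto intro!: derivative_eq_intros)
  have vi: "\<forall>x0 x. lo \<le> x0 \<longrightarrow> x0 \<le> x \<longrightarrow> x \<le> hi \<longrightarrow>
       ((\<lambda>y. - (L^2) * (mcoef r1 r2 r3 y + lam') * (K * psi y)) has_integral (K * dpsi x - K * dpsi x0)) {x0..x}"
  proof (intro allI impI)
    fix x0 x :: real assume "lo \<le> x0" "x0 \<le> x" "x \<le> hi"
    then have "((\<lambda>y. K * (- (L^2) * (mcoef r1 r2 r3 y + lam') * psi y)) has_integral (K * (dpsi x - dpsi x0))) {x0..x}"
      using pf by (intro has_integral_mult_right) auto
    then show "((\<lambda>y. - (L^2) * (mcoef r1 r2 r3 y + lam') * (K * psi y)) has_integral (K * dpsi x - K * dpsi x0)) {x0..x}"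
      by (simp add: algebra_simps)
  qed
  have "lo < hi" using lo hi by auto
  have "\<forall>y\<in>{lo..hi}. K * psi y \<le> phi y"
    by (rule cmp[OF D \<open>lo < hi\<close> ab(6) _ vd vi vlo vhi]) (use L in auto)
  then have "K * psi 0 \<le> phi 0" using lo hi by auto
  then show False using p0 unfolding K_def by simp
qed

lemma cot_decr:
  fixes x y :: real
  assumes "0 < x" "x < y" "y < pi"
  shows "cot y < cot x"
proof -
  have sx: "sin x > 0" using assms by (intro sin_gt_zero) auto
  have sy: "sin y > 0" using assms by (intro sin_gt_zero) auto
  have "sin (y - x) > 0" using assms by (intro sin_gt_zero) auto
  then have "cos y * sin x < cos x * sin y" by (simp add: sin_diff algebra_simps)
  then show ?thesis unfolding cot_def using sx sy by (simp add: divide_less_eq less_divide_eq mult.commute)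
qed

lemma cot_mono_le:
  fixes x y :: real
  assumes "0 < x" "x \<le> y" "y < pi"
  shows "cot y \<le> cot x"
  using cot_decr[of x y] assms by (cases "x = y") auto

lemma arccot_pos:
  fixes k :: real
  assumes "k > 0"
  shows "arccot k = arctan (1 / k)" "0 < arccot k" "arccot k < pi / 2" "cot (arccot k) = k"
proof -
  define t where "t = arctan (1 / k)"
  have t: "0 < t" "t < pi / 2" using assms arctan_ubound unfolding t_def by auto
  have ct: "cot t = k" unfolding t_def cot_altdef tan_arctan by simp
  have "arccot k = t"
    unfolding arccot_def
  proof (rule the_equality)
    show "0 < t \<and> t < pi \<and> cot t = k" using t ct by auto
    fix u assume u: "0 < u \<and> u < pi \<and> cot u = k"
    show "u = t"
    proof (rule ccontr)
      assume "u \<noteq> t"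
      then consider "u < t" | "t < u" by linarith
      then show False
        using cot_decr[of u t] cot_decr[of t u] u t ct by (cases; auto)
    qed
  qed
  then show "arccot k = arctan (1 / k)" "0 < arccot k" "arccot k < pi / 2" "cot (arccot k) = k"
    using t ct unfolding t_def by auto
qed

definition Sset :: "real \<Rightarrow> (real \<Rightarrow> real) \<Rightarrow> real set" where
  "Sset L m = {lam. \<exists>phi dphi ddphi. W21loc phi dphi ddphi \<and> (\<forall>y. phi y > 0) \<and>
       (AE y in lborel. ddphi y / L\<^sup>2 + m y * phi y + lam * phi y \<le> 0)}"

lemma gpe_Sset: "gen_princ_eig L m = Sup (Sset L m)"
  unfolding gen_princ_eig_def Sset_def by simp

lemma eig_sup:
  assumes r: "r1 > 0" "r2 > 0" "r3 > 0" and L: "L > 0" and rm: "r2 > max r1 r3"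
    and lin: "lam' \<in> {-r2<..<lam_bar r1 r2 r3 L}" and F0: "Fdisp r1 r2 r3 L lam' = 0"
  shows "gen_princ_eig L (mcoef r1 r2 r3) = lam'"
proof -
  have l1: "lam' < - r1" "lam' < - r3" "lam' < pi^2 / L^2 - r2" "- r2 < lam'"
    using lin unfolding lam_bar_def by auto
  define s where "s = sqrt (r2 + lam')"
  define al where "al = sqrt (- r1 - lam')"
  define be where "be = sqrt (- r3 - lam')"
  have sp: "s > 0" "al > 0" "be > 0" using l1 unfolding s_def al_def be_def by auto
  have s2: "s^2 = r2 + lam'" "al^2 = - r1 - lam'" "be^2 = - r3 - lam'"
    using l1 unfolding s_def al_def be_def by auto
  define k where "k = L * s"
  define a where "a = L * al"
  define b where "b = L * be"
  have kp: "k > 0" "a > 0" "b > 0" using sp L unfolding k_def a_def b_def by auto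
  have L2: "L^2 > 0" using L by auto
  have "s^2 < pi^2 / L^2" using s2 l1 by auto
  then have "k^2 < pi^2" unfolding k_def using L2 by (simp add: power_mult_distrib less_divide_eq mult.commute)
  then have kpi: "k < pi" using kp by (smt (verit) pi_gt_zero power_mono)
  have sk: "sin k > 0" using kp kpi by (intro sin_gt_zero) auto
  have prod: "sqrt ((r1 + lam') * (r3 + lam')) = al * be"
  proof -
    have "(r1 + lam') * (r3 + lam') = (- r1 - lam') * (- r3 - lam')" by (simp add: algebra_simps)
    then show ?thesis unfolding al_def be_def by (simp add: real_sqrt_mult)
  qed
  have "cot k = (r2 + lam' - al * be) / (s * (al + be))"
    using F0 unfolding Fdisp_def prod k_def s_def al_def be_def by simp
  then have "cot k = (s^2 - al * be) / (s * (al + be))" using s2(1) by simp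
  then have "cos k / sin k = (s^2 - al * be) / (s * (al + be))" unfolding cot_def .
  moreover have "s * (al + be) \<noteq> 0" using sp by simp
  ultimately have "cos k * (s * (al + be)) = (s^2 - al * be) * sin k"
    using sk by (simp add: frac_eq_eq)
  then have "L^2 * (cos k * (s * (al + be))) = L^2 * ((s^2 - al * be) * sin k)" by simp
  then have key: "cos k * (k * (a + b)) = (k^2 - a * b) * sin k"
    unfolding k_def a_def b_def by (simp add: algebra_simps power2_eq_square)
  define A where "A = a / k"
  have Ak: "A * k = a" unfolding A_def using kp by simp
  define c where "c = cos k + A * sin k"
  have cpos: "c > 0"
  proof -
    have "c * (k * (a + b)) = cos k * (k * (a + b)) + A * k * sin k * (a + b)" unfolding c_def by (simp add: algebra_simps)
    also have "\<dots> = (k^2 + a^2) * sin k" unfolding key Ak by (simp add: algebra_simps power2_eq_square)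
    moreover have "(k^2 + a^2) * sin k > 0" using sk kp by (intro mult_pos_pos add_pos_pos) auto
    ultimately have "c * (k * (a + b)) > 0" by simp
    moreover have "k * (a + b) > 0" using kp by simp
    ultimately show ?thesis using zero_less_mult_pos2 by blast
  qed
  define f1 where "f1 = (\<lambda>y::real. exp (a * y))"
  define g1 where "g1 = (\<lambda>y::real. a * exp (a * y))"
  define f2 where "f2 = (\<lambda>y::real. cos (k * y) + A * sin (k * y))"
  define g2 where "g2 = (\<lambda>y::real. - k * sin (k * y) + A * k * cos (k * y))"
  define f3 where "f3 = (\<lambda>y::real. c * exp (- b * (y - 1)))"
  define g3 where "g3 = (\<lambda>y::real. - b * c * exp (- b * (y - 1)))"
  have "a * a = L^2 * al^2" unfolding a_def by (simp add: power2_eq_square)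
  then have a2: "a * a = - (L^2) * (r1 + lam')" using s2(2) by (simp add: algebra_simps)
  have "b * b = L^2 * be^2" unfolding b_def by (simp add: power2_eq_square)
  then have b2: "b * b = - (L^2) * (r3 + lam')" using s2(3) by (simp add: algebra_simps)
  have "k * k = L^2 * s^2" unfolding k_def by (simp add: power2_eq_square)
  then have k2: "k * k = L^2 * (r2 + lam')" using s2(1) by simp
  have d1: "(f1 has_real_derivative g1 x) (at x)" for x
    unfolding f1_def g1_def by (auto intro!: derivative_eq_intros)
  have d2: "(f2 has_real_derivative g2 x) (at x)" for x
    unfolding f2_def g2_def by (auto intro!: derivative_eq_intros simp: algebra_simps)
  have d3: "(f3 has_real_derivative g3 x) (at x)" for x
    unfolding f3_def g3_def by (auto intro!: derivative_eq_intros simp: algebra_simps)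
  have dd1: "(g1 has_real_derivative (- (L^2) * (r1 + lam') * f1 x)) (at x)" for x
  proof -
    have "(g1 has_real_derivative (a * a) * f1 x) (at x)"
      unfolding f1_def g1_def by (auto intro!: derivative_eq_intros simp: algebra_simps)
    then show ?thesis unfolding a2 .
  qed
  have dd2: "(g2 has_real_derivative (- (L^2) * (r2 + lam') * f2 x)) (at x)" for x
  proof -
    have "(g2 has_real_derivative - (k * k) * f2 x) (at x)"
      unfolding f2_def g2_def by (auto intro!: derivative_eq_intros simp: algebra_simps)
    then show ?thesis unfolding k2 by simp
  qed
  have dd3: "(g3 has_real_derivative (- (L^2) * (r3 + lam') * f3 x)) (at x)" for x
  proof -
    have "(g3 has_real_derivative (b * b) * f3 x) (at x)"
      unfolding f3_def g3_def by (auto intro!: derivative_eq_intros simp: algebra_simps)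
    then show ?thesis unfolding b2 .
  qed
  have m0: "f1 0 = f2 0" "g1 0 = g2 0" unfolding f1_def f2_def g1_def g2_def using Ak by auto
  have m1a: "f2 1 = f3 1" unfolding f2_def f3_def c_def by simp
  have m1b: "g2 1 = g3 1"
  proof -
    have g2e: "g2 1 = -k * sin k + a * cos k" unfolding g2_def using Ak by simp
    have g3e: "g3 1 = -b * cos k - b * (a / k) * sin k" unfolding g3_def c_def A_def by (simp add: algebra_simps)
    have l: "k * (-k * sin k + a * cos k) = -(k^2) * sin k + a * k * cos k" by (simp add: algebra_simps power2_eq_square)
    have rr: "k * (-b * cos k - b * (a / k) * sin k) = - b * k * cos k - a * b * sin k" using kp by (simp add: algebra_simps)
    have kk: "cos k * (k * (a + b)) = a * k * cos k + b * k * cos k" by (simp add: algebra_simps)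
    have kk2: "(k^2 - a * b) * sin k = k^2 * sin k - a * b * sin k" by (simp add: algebra_simps)
    have "k * g2 1 = k * g3 1" unfolding g2e g3e l rr using key kk kk2 by linarith
    then show ?thesis using kp by simp
  qed
  have p1: "0 < f1 x" for x unfolding f1_def by simp
  have p3: "0 < f3 x" for x unfolding f3_def using cpos by simp
  have p2: "0 < f2 x" if "0 \<le> x" "x < 1" for x
  proof (cases "x = 0")
    case True then show ?thesis unfolding f2_def by simp
  next
    case False
    define th where "th = k * x"
    have th: "0 < th" "th < k" using that False kp unfolding th_def by auto
    have st: "sin th > 0" using th kpi by (intro sin_gt_zero) auto
    have skt: "sin (k - th) > 0" using th kpi by (intro sin_gt_zero) auto
    have "f2 x * sin k = sin (k - th) + sin th * c"
      unfolding f2_def c_def th_def by (simp add: sin_diff algebra_simps)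
    also have "\<dots> > 0" using skt st cpos by (simp add: add_pos_pos)
    finally show ?thesis using sk by (simp add: zero_less_mult_iff)
  qed
  obtain psi dpsi where ps: "\<forall>y. 0 < psi y" "\<forall>y. (psi has_real_derivative dpsi y) (at y)"
    "\<forall>x0 x. x0 \<le> x \<longrightarrow> ((\<lambda>y. - (L^2) * (mcoef r1 r2 r3 y + lam') * psi y) has_integral (dpsi x - dpsi x0)) {x0..x}"
    "\<forall>y<0. psi y = f1 y" "\<forall>y\<ge>1. psi y = f3 y" "psi 0 = f2 0"
    using build[OF d1 d2 d3 dd1 dd2 dd3 m0 m1a m1b p1 p2 p3] by blast
  have inS: "lam' \<in> Sset L (mcoef r1 r2 r3)"
    using in_set[OF _ ps(1,2,3)] L unfolding Sset_def by auto
  have ub: "lam \<le> lam'" if lS: "lam \<in> Sset L (mcoef r1 r2 r3)" for lam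
  proof (rule ccontr)
    assume "\<not> lam \<le> lam'"
    then have gt: "lam' < lam" by simp
    obtain phi dphi ddphi where W: "W21loc phi dphi ddphi" "\<forall>y. phi y > 0"
      "AE y in lborel. ddphi y / L\<^sup>2 + mcoef r1 r2 r3 y * phi y + lam * phi y \<le> 0"
      using lS unfolding Sset_def by auto
    have D: "Dsup r1 r2 r3 L lam phi dphi" using set_to_D[OF W] L by auto
    show False
    proof (rule no_above_eig[OF D L ps(1,2,3)])
      show "\<forall>y<0. psi y = exp (a * y)" using ps(4) unfolding f1_def by auto
      show "\<forall>y\<ge>1. psi y = c * exp (- b * (y - 1))" using ps(5) unfolding f3_def by auto
      show "psi 0 = 1" using ps(6) unfolding f2_def by simp
      show "a^2 = L^2 * (- r1 - lam')" using a2 by (simp add: power2_eq_square algebra_simps)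
      show "b^2 = L^2 * (- r3 - lam')" using b2 by (simp add: power2_eq_square algebra_simps)
    qed (use kp cpos gt in auto)
  qed
  show ?thesis unfolding gpe_Sset by (rule cSup_eq_maximum[OF inS ub])
qed

lemma ub_max:
  assumes r: "r1 > 0" "r2 > 0" "r3 > 0" and L: "L > 0"
    and lS: "lam \<in> Sset L (mcoef r1 r2 r3)"
  shows "lam \<le> - max r1 r3"
proof (rule ccontr)
  assume "\<not> lam \<le> - max r1 r3"
  then have gt: "lam > - r1 \<or> lam > - r3" by (auto simp: max_def split: if_splits)
  obtain phi dphi ddphi where W: "W21loc phi dphi ddphi" "\<forall>y. phi y > 0"
    "AE y in lborel. ddphi y / L\<^sup>2 + mcoef r1 r2 r3 y * phi y + lam * phi y \<le> 0"
    using lS unfolding Sset_def by auto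
  have D: "Dsup r1 r2 r3 L lam phi dphi" using set_to_D[OF W] L by auto
  have L2: "L^2 > 0" using L by simp
  show False
  proof (cases "lam > - r1")
    case True
    define om where "om = L * sqrt (r1 + lam) / 2"
    have om: "om > 0" using True L unfolding om_def by simp
    have "om^2 = L^2 * (r1 + lam) / 4" unfolding om_def using True by (simp add: power_divide power_mult_distrib)
    moreover have "L^2 * (r1 + lam) > 0" using True L2 by simp
    ultimately have om2: "om^2 < L^2 * (r1 + lam)" by linarith
    show False
    proof (rule no_bump[OF D _ om om2, of "- pi / om - 1"])
      show "L \<noteq> 0" using L by simp
      fix y assume "- pi / om - 1 \<le> y" "y \<le> - pi / om - 1 + pi / om"
      then show "mcoef r1 r2 r3 y = r1" by (simp add: mcoef_def)
    qed
  next
    case False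
    then have T: "lam > - r3" using gt by auto
    define om where "om = L * sqrt (r3 + lam) / 2"
    have om: "om > 0" using T L unfolding om_def by simp
    have "om^2 = L^2 * (r3 + lam) / 4" unfolding om_def using T by (simp add: power_divide power_mult_distrib)
    moreover have "L^2 * (r3 + lam) > 0" using T L2 by simp
    ultimately have om2: "om^2 < L^2 * (r3 + lam)" by linarith
    show False
    proof (rule no_bump[OF D _ om om2, of 2])
      show "L \<noteq> 0" using L by simp
      fix y assume "2 \<le> y" "y \<le> 2 + pi / om"
      then show "mcoef r1 r2 r3 y = r3" by (simp add: mcoef_def)
    qed
  qed
qed

lemma in_case_i_13:
  assumes r: "r1 > 0" "r2 > 0" "r3 > 0" and L: "L > 0" and rm: "r2 > r1" and r13: "r1 > r3"
    and LL: "L * sqrt (r2 - r1) \<le> arccot (sqrt ((r2 - r1) / (r1 - r3)))"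
  shows "- r1 \<in> Sset L (mcoef r1 r2 r3)"
proof -
  define k where "k = L * sqrt (r2 - r1)"
  define b where "b = L * sqrt (r1 - r3)"
  define ka where "ka = sqrt ((r2 - r1) / (r1 - r3))"
  have kp: "k > 0" "b > 0" "ka > 0" using L rm r13 unfolding k_def b_def ka_def by auto
  have kab: "ka = k / b" unfolding ka_def k_def b_def using L by (simp add: real_sqrt_divide)
  note ac = arccot_pos[OF kp(3)]
  have kle: "k \<le> arccot ka" using LL unfolding k_def ka_def .
  have kpi2: "k < pi / 2" using kle ac by linarith
  have cotk: "ka \<le> cot k" using cot_mono_le[of k "arccot ka"] kp kle ac by (simp add: ac(4))
  have sk: "sin k > 0" using kp kpi2 by (intro sin_gt_zero) auto
  have ck: "cos k > 0" using kp kpi2 by (intro cos_gt_zero_pi) auto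
  define P where "P = (cos k - (k / b) * sin k) / 2"
  define Q where "Q = (cos k + (k / b) * sin k) / 2"
  have P: "P \<ge> 0"
  proof -
    have "k / b \<le> cos k / sin k" using cotk kab unfolding cot_def by simp
    then have "(k / b) * sin k \<le> cos k" using sk by (simp add: le_divide_eq)
    then show ?thesis unfolding P_def by simp
  qed
  have Q: "Q > 0" unfolding Q_def using ck sk kp by (simp add: add_pos_nonneg)
  define f1 where "f1 = (\<lambda>y::real. 1::real)"
  define g1 where "g1 = (\<lambda>y::real. 0::real)"
  define f2 where "f2 = (\<lambda>y::real. cos (k * y))"
  define g2 where "g2 = (\<lambda>y::real. - k * sin (k * y))"
  define f3 where "f3 = (\<lambda>y::real. P * exp (b * (y - 1)) + Q * exp (- b * (y - 1)))"
  define g3 where "g3 = (\<lambda>y::real. b * P * exp (b * (y - 1)) - b * Q * exp (- b * (y - 1)))"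
  have "k * k = L^2 * (r2 - r1)" unfolding k_def using rm by (simp add: power2_eq_square algebra_simps)
  then have k2: "- (k * k) = - (L^2) * (r2 + - r1)" by simp
  have "b * b = L^2 * (r1 - r3)" unfolding b_def using r13 by (simp add: power2_eq_square algebra_simps)
  then have b2: "b * b = - (L^2) * (r3 + - r1)" by (simp add: algebra_simps)
  have d1: "(f1 has_real_derivative g1 x) (at x)" for x
    unfolding f1_def g1_def by (auto intro!: derivative_eq_intros)
  have d2: "(f2 has_real_derivative g2 x) (at x)" for x
    unfolding f2_def g2_def by (auto intro!: derivative_eq_intros simp: algebra_simps)
  have d3: "(f3 has_real_derivative g3 x) (at x)" for x
    unfolding f3_def g3_def by (auto intro!: derivative_eq_intros simp: algebra_simps)
  have dd1: "(g1 has_real_derivative (- (L^2) * (r1 + - r1) * f1 x)) (at x)" for x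
    unfolding f1_def g1_def by (auto intro!: derivative_eq_intros)
  have dd2: "(g2 has_real_derivative (- (L^2) * (r2 + - r1) * f2 x)) (at x)" for x
  proof -
    have "(g2 has_real_derivative - (k * k) * f2 x) (at x)"
      unfolding f2_def g2_def by (auto intro!: derivative_eq_intros simp: algebra_simps)
    then show ?thesis unfolding k2 .
  qed
  have dd3: "(g3 has_real_derivative (- (L^2) * (r3 + - r1) * f3 x)) (at x)" for x
  proof -
    have "(g3 has_real_derivative (b * b) * f3 x) (at x)"
      unfolding f3_def g3_def by (auto intro!: derivative_eq_intros simp: algebra_simps)
    then show ?thesis unfolding b2 .
  qed
  have m0: "f1 0 = f2 0" "g1 0 = g2 0" unfolding f1_def f2_def g1_def g2_def by auto
  have PQ: "P + Q = cos k" "b * P - b * Q = - k * sin k"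
  proof -
    show "P + Q = cos k" unfolding P_def Q_def by argo
    have "b * P - b * Q = b * (P - Q)" by (simp add: algebra_simps)
    also have "P - Q = - (k / b) * sin k" unfolding P_def Q_def by argo
    finally show "b * P - b * Q = - k * sin k" using kp by simp
  qed
  have m1a: "f2 1 = f3 1" unfolding f2_def f3_def using PQ by simp
  have m1b: "g2 1 = g3 1" unfolding g2_def g3_def using PQ by simp
  have p1: "0 < f1 x" for x unfolding f1_def by simp
  have p3: "0 < f3 x" for x unfolding f3_def using P Q by (simp add: add_nonneg_pos)
  have p2: "0 < f2 x" if "0 \<le> x" "x < 1" for x
  proof -
    have "k * x < k * 1" using mult_strict_left_mono[of x 1 k] that kp by simp
    then have "k * x < pi / 2" using kpi2 by simp
    moreover have "0 \<le> k * x" using that kp by simp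
    ultimately show ?thesis unfolding f2_def by (intro cos_gt_zero_pi) auto
  qed
  obtain psi dpsi where ps: "\<forall>y. 0 < psi y" "\<forall>y. (psi has_real_derivative dpsi y) (at y)"
    "\<forall>x0 x. x0 \<le> x \<longrightarrow> ((\<lambda>y. - (L^2) * (mcoef r1 r2 r3 y + - r1) * psi y) has_integral (dpsi x - dpsi x0)) {x0..x}"
    using build[OF d1 d2 d3 dd1 dd2 dd3 m0 m1a m1b p1 p2 p3] by blast
  show ?thesis using in_set[OF _ ps(1,2,3)] L unfolding Sset_def by auto
qed

lemma in_case_i_31:
  assumes r: "r1 > 0" "r2 > 0" "r3 > 0" and L: "L > 0" and rm: "r2 > r3" and r13: "r3 > r1"
    and LL: "L * sqrt (r2 - r3) \<le> arccot (sqrt ((r2 - r3) / (r3 - r1)))"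
  shows "- r3 \<in> Sset L (mcoef r1 r2 r3)"
proof -
  define k where "k = L * sqrt (r2 - r3)"
  define a where "a = L * sqrt (r3 - r1)"
  define ka where "ka = sqrt ((r2 - r3) / (r3 - r1))"
  have kp: "k > 0" "a > 0" "ka > 0" using L rm r13 unfolding k_def a_def ka_def by auto
  have kab: "ka = k / a" unfolding ka_def k_def a_def using L by (simp add: real_sqrt_divide)
  note ac = arccot_pos[OF kp(3)]
  have kle: "k \<le> arccot ka" using LL unfolding k_def ka_def .
  have kpi2: "k < pi / 2" using kle ac by linarith
  have cotk: "ka \<le> cot k" using cot_mono_le[of k "arccot ka"] kp kle ac by (simp add: ac(4))
  have sk: "sin k > 0" using kp kpi2 by (intro sin_gt_zero) auto
  have ck: "cos k > 0" using kp kpi2 by (intro cos_gt_zero_pi) auto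
  define P where "P = (cos k + (k / a) * sin k) / 2"
  define Q where "Q = (cos k - (k / a) * sin k) / 2"
  have Q: "Q \<ge> 0"
  proof -
    have "k / a \<le> cos k / sin k" using cotk kab unfolding cot_def by simp
    then have "(k / a) * sin k \<le> cos k" using sk by (simp add: le_divide_eq)
    then show ?thesis unfolding Q_def by simp
  qed
  have P: "P > 0" unfolding P_def using ck sk kp by (simp add: add_pos_nonneg)
  define f3 where "f3 = (\<lambda>y::real. 1::real)"
  define g3 where "g3 = (\<lambda>y::real. 0::real)"
  define f2 where "f2 = (\<lambda>y::real. cos (k * (y - 1)))"
  define g2 where "g2 = (\<lambda>y::real. - k * sin (k * (y - 1)))"
  define f1 where "f1 = (\<lambda>y::real. P * exp (a * y) + Q * exp (- a * y))"
  define g1 where "g1 = (\<lambda>y::real. a * P * exp (a * y) - a * Q * exp (- a * y))"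
  have "k * k = L^2 * (r2 - r3)" unfolding k_def using rm by (simp add: power2_eq_square algebra_simps)
  then have k2: "- (k * k) = - (L^2) * (r2 + - r3)" by simp
  have "a * a = L^2 * (r3 - r1)" unfolding a_def using r13 by (simp add: power2_eq_square algebra_simps)
  then have a2: "a * a = - (L^2) * (r1 + - r3)" by (simp add: algebra_simps)
  have d1: "(f1 has_real_derivative g1 x) (at x)" for x
    unfolding f1_def g1_def by (auto intro!: derivative_eq_intros simp: algebra_simps)
  have d2: "(f2 has_real_derivative g2 x) (at x)" for x
    unfolding f2_def g2_def by (auto intro!: derivative_eq_intros simp: algebra_simps)
  have d3: "(f3 has_real_derivative g3 x) (at x)" for x
    unfolding f3_def g3_def by (auto intro!: derivative_eq_intros)
  have dd3: "(g3 has_real_derivative (- (L^2) * (r3 + - r3) * f3 x)) (at x)" for x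
    unfolding f3_def g3_def by (auto intro!: derivative_eq_intros)
  have dd2: "(g2 has_real_derivative (- (L^2) * (r2 + - r3) * f2 x)) (at x)" for x
  proof -
    have "(g2 has_real_derivative - (k * k) * f2 x) (at x)"
      unfolding f2_def g2_def by (auto intro!: derivative_eq_intros simp: algebra_simps)
    then show ?thesis unfolding k2 .
  qed
  have dd1: "(g1 has_real_derivative (- (L^2) * (r1 + - r3) * f1 x)) (at x)" for x
  proof -
    have "(g1 has_real_derivative (a * a) * f1 x) (at x)"
      unfolding f1_def g1_def by (auto intro!: derivative_eq_intros simp: algebra_simps)
    then show ?thesis unfolding a2 .
  qed
  have m1: "f2 1 = f3 1" "g2 1 = g3 1" unfolding f3_def f2_def g3_def g2_def by auto
  have PQ: "P + Q = cos k" "a * P - a * Q = k * sin k"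
  proof -
    show "P + Q = cos k" unfolding P_def Q_def by argo
    have "a * P - a * Q = a * (P - Q)" by (simp add: algebra_simps)
    also have "P - Q = (k / a) * sin k" unfolding P_def Q_def by argo
    finally show "a * P - a * Q = k * sin k" using kp by simp
  qed
  have m0a: "f1 0 = f2 0" unfolding f2_def f1_def using PQ by simp
  have m0b: "g1 0 = g2 0" unfolding g2_def g1_def using PQ by simp
  have p3: "0 < f3 x" for x unfolding f3_def by simp
  have p1: "0 < f1 x" for x unfolding f1_def using P Q by (simp add: add_pos_nonneg)
  have p2: "0 < f2 x" if "0 \<le> x" "x < 1" for x
  proof -
    have "k * (-1) \<le> k * (x - 1)" using mult_left_mono[of "-1" "x - 1" k] that kp by simp
    then have "- (pi / 2) < k * (x - 1)" using kpi2 by simp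
    moreover have "k * (x - 1) \<le> 0" using that kp by (simp add: mult_nonneg_nonpos)
    ultimately show ?thesis unfolding f2_def by (intro cos_gt_zero_pi) auto
  qed
  obtain psi dpsi where ps: "\<forall>y. 0 < psi y" "\<forall>y. (psi has_real_derivative dpsi y) (at y)"
    "\<forall>x0 x. x0 \<le> x \<longrightarrow> ((\<lambda>y. - (L^2) * (mcoef r1 r2 r3 y + - r3) * psi y) has_integral (dpsi x - dpsi x0)) {x0..x}"
    using build[OF d1 d2 d3 dd1 dd2 dd3 m0a m0b m1 p1 p2 p3] by blast
  show ?thesis using in_set[OF _ ps(1,2,3)] L unfolding Sset_def by auto
qed

lemma case_i:
  assumes r: "r1 > 0" "r2 > 0" "r3 > 0" and L: "L > 0" and rm: "r2 > max r1 r3"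
    and LL: "L \<le> Lunder r1 r2 r3"
  shows "gen_princ_eig L (mcoef r1 r2 r3) = - max r1 r3"
proof -
  have ne: "r1 \<noteq> r3" using LL L unfolding Lunder_def by auto
  have inS: "- max r1 r3 \<in> Sset L (mcoef r1 r2 r3)"
  proof (cases "r1 > r3")
    case True
    then have mx: "max r1 r3 = r1" "\<bar>r1 - r3\<bar> = r1 - r3" by auto
    have sp: "sqrt (r2 - r1) > 0" using rm mx by simp
    have "L * sqrt (r2 - r1) \<le> arccot (sqrt ((r2 - r1) / (r1 - r3)))"
      using LL ne sp unfolding Lunder_def mx by (simp add: field_simps)
    then show ?thesis using in_case_i_13[OF r L _ True] rm mx by auto
  next
    case False
    then have T: "r3 > r1" using ne by auto
    then have mx: "max r1 r3 = r3" "\<bar>r1 - r3\<bar> = r3 - r1" by auto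
    have sp: "sqrt (r2 - r3) > 0" using rm mx by simp
    have "L * sqrt (r2 - r3) \<le> arccot (sqrt ((r2 - r3) / (r3 - r1)))"
      using LL ne sp unfolding Lunder_def mx by (simp add: field_simps)
    then show ?thesis using in_case_i_31[OF r L _ T] rm mx by auto
  qed
  show ?thesis unfolding gpe_Sset by (rule cSup_eq_maximum[OF inS ub_max[OF r L]])
qed

lemma Fdisp_eq: "Fdisp r1 r2 r3 L = (\<lambda>x. cot (L * sqrt (r2 + x)) -
     (r2 + x - sqrt ((r1 + x) * (r3 + x))) / (sqrt (r2 + x) * (sqrt (- r1 - x) + sqrt (- r3 - x))))"
  by (rule ext) (simp add: Fdisp_def)

lemma Lsqrt_lt_pi:
  assumes "L > 0" "0 \<le> r2 + x" "x < pi^2 / L^2 - r2"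
  shows "L * sqrt (r2 + x) < pi"
proof -
  have "r2 + x < pi^2 / L^2" using assms by simp
  then have "L^2 * (r2 + x) < pi^2" using assms(1) by (simp add: less_divide_eq mult.commute)
  then have "(L * sqrt (r2 + x))^2 < pi^2" using assms(2) by (simp add: power_mult_distrib)
  then show ?thesis by (rule power_less_imp_less_base) (use pi_gt_zero in auto)
qed

lemma Fdisp_cont:
  assumes "L > 0" "r2 + lam > 0" "L * sqrt (r2 + lam) < pi" "sqrt (- r1 - lam) + sqrt (- r3 - lam) \<noteq> 0"
  shows "isCont (Fdisp r1 r2 r3 L) lam"
proof -
  have "sin (L * sqrt (r2 + lam)) > 0" using assms by (intro sin_gt_zero) auto
  then show ?thesis unfolding Fdisp_eq using assms
    by (intro continuous_intros) auto
qed

lemma left_point: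
  assumes r: "r1 > 0" "r2 > 0" "r3 > 0" and L: "L > 0" and rm: "r2 > max r1 r3"
    and dl: "0 < dl" "dl \<le> (r2 - max r1 r3) / 4" "dl \<le> pi^2 / (8 * L^2)"
  shows "Fdisp r1 r2 r3 L (- r2 + dl) > 0"
proof -
  define D where "D = r2 - max r1 r3"
  have D: "D > 0" using rm unfolding D_def by simp
  have L2: "L^2 > 0" using L by simp
  have "(L * sqrt dl)^2 = L^2 * dl" using dl by (simp add: power_mult_distrib)
  also have "\<dots> \<le> L^2 * (pi^2 / (8 * L^2))" using dl L2 by (intro mult_left_mono) auto
  also have "\<dots> = pi^2 / 8" using L2 by simp
  also have "\<dots> < (pi / 2)^2" by (simp add: power_divide)
  finally have "(L * sqrt dl)^2 < (pi / 2)^2" .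
  then have Lp: "L * sqrt dl < pi / 2" by (rule power_less_imp_less_base) (use pi_gt_zero in auto)
  have cpos: "cot (L * sqrt dl) > 0" using Lp dl L by (intro cot_gt_zero) auto
  have f1: "r2 - r1 - dl > dl" "r2 - r3 - dl > dl" using dl D unfolding D_def by auto
  have "dl * dl < (r2 - r1 - dl) * (r2 - r3 - dl)"
    using f1 dl by (intro mult_strict_mono) auto
  moreover have "(r2 - r1 - dl) * (r2 - r3 - dl) = (r1 + (- r2 + dl)) * (r3 + (- r2 + dl))"
    by (simp add: algebra_simps)
  ultimately have "dl < sqrt ((r1 + (- r2 + dl)) * (r3 + (- r2 + dl)))"
    by (intro real_less_rsqrt) (simp add: power2_eq_square)
  then have num: "r2 + (- r2 + dl) - sqrt ((r1 + (- r2 + dl)) * (r3 + (- r2 + dl))) < 0" by simp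
  have den: "sqrt (r2 + (- r2 + dl)) * (sqrt (- r1 - (- r2 + dl)) + sqrt (- r3 - (- r2 + dl))) > 0"
    using dl f1 by (intro mult_pos_pos add_pos_pos) auto
  have "(r2 + (- r2 + dl) - sqrt ((r1 + (- r2 + dl)) * (r3 + (- r2 + dl)))) /
        (sqrt (r2 + (- r2 + dl)) * (sqrt (- r1 - (- r2 + dl)) + sqrt (- r3 - (- r2 + dl)))) < 0"
    using num den by (rule divide_neg_pos)
  then show ?thesis unfolding Fdisp_def using cpos by simp
qed

lemma frac_lower:
  fixes s al be :: real
  assumes "s > 0" "al > 0" "be > 0"
  shows "- al / s \<le> (s^2 - al * be) / (s * (al + be))"
proof -
  have d: "s * (al + be) > 0" using assms by simp
  have "- al / s = (- al * (al + be)) / (s * (al + be))" using assms by simp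
  also have "\<dots> \<le> (s^2 - al * be) / (s * (al + be))"
  proof (rule divide_right_mono)
    have "- al * (al + be) = - (al * al) - al * be" by (simp add: algebra_simps)
    moreover have "0 \<le> al * al" "0 \<le> s^2" by auto
    ultimately show "- al * (al + be) \<le> s^2 - al * be" by linarith
  qed (use d in auto)
  finally show ?thesis .
qed

lemma caseA:
  assumes r: "r1 > 0" "r2 > 0" "r3 > 0" and L: "L > 0" and rm: "r2 > max r1 r3"
    and A: "pi^2 / L^2 - r2 \<le> - max r1 r3" and dl: "0 < dl" "dl \<le> pi^2 / (8 * L^2)"
  shows "\<exists>lr. - r2 + dl < lr \<and> lr < lam_bar r1 r2 r3 L \<and> Fdisp r1 r2 r3 L lr < 0"
proof -
  have lb: "lam_bar r1 r2 r3 L = pi^2 / L^2 - r2" using A unfolding lam_bar_def by simp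
  define Mb where "Mb = 2 * L * sqrt r2 / pi + 1"
  have Mb: "Mb > 0" unfolding Mb_def using L r by (simp add: add_pos_nonneg)
  define th where "th = arctan (1 / Mb)"
  have th: "0 < th" "th < pi / 2" using Mb arctan_ubound unfolding th_def by auto
  define x where "x = pi - th"
  have x: "pi / 2 < x" "x < pi" "0 < x" using th unfolding x_def by auto
  have cotx: "cot x = - Mb"
  proof -
    have "cot x = - (cos th / sin th)" unfolding x_def cot_def by simp
    also have "cos th / sin th = Mb" using cot_altdef[of th] unfolding cot_def th_def tan_arctan by simp
    finally show ?thesis .
  qed
  define lr where "lr = x^2 / L^2 - r2"
  have L2: "L^2 > 0" using L by simp
  have rl: "r2 + lr = (x / L)^2" unfolding lr_def by (simp add: power_divide)
  define s where "s = sqrt (r2 + lr)"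
  have s: "s = x / L" unfolding s_def rl using x L by simp
  have sp: "s > 0" using s x L by simp
  have Ls: "L * s = x" using s L by simp
  have "x^2 < pi^2" using x by (simp add: power_strict_mono)
  then have lrb: "lr < pi^2 / L^2 - r2" unfolding lr_def using L2 by (simp add: divide_strict_right_mono)
  then have lrM: "lr < - r1" "lr < - r3" using A by auto
  define al where "al = sqrt (- r1 - lr)"
  define be where "be = sqrt (- r3 - lr)"
  have ab: "al > 0" "be > 0" using lrM unfolding al_def be_def by auto
  have lrg: "lr > - r2" unfolding lr_def using x L2 by simp
  have alb: "al \<le> sqrt r2" unfolding al_def using lrg r by simp
  have prod: "sqrt ((r1 + lr) * (r3 + lr)) = al * be"
  proof -
    have "(r1 + lr) * (r3 + lr) = (- r1 - lr) * (- r3 - lr)" by (simp add: algebra_simps)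
    then show ?thesis unfolding al_def be_def by (simp add: real_sqrt_mult)
  qed
  have s2: "s^2 = r2 + lr" unfolding s_def using lrg by simp
  have G: "- al / s \<le> (r2 + lr - sqrt ((r1 + lr) * (r3 + lr))) / (sqrt (r2 + lr) * (al + be))"
    using frac_lower[OF sp ab] lrg unfolding prod s_def by simp
  have "al / s = al * L / x" unfolding s using L by simp
  also have "\<dots> \<le> sqrt r2 * L / (pi / 2)"
  proof (rule frac_le)
    show "0 \<le> sqrt r2 * L" using r L by simp
    show "al * L \<le> sqrt r2 * L" using alb L by (simp add: mult_right_mono)
    show "0 < pi / 2" by simp
    show "pi / 2 \<le> x" using x by simp
  qed
  also have "\<dots> = Mb - 1" unfolding Mb_def by simp
  finally have "al / s \<le> Mb - 1" .
  have Fe: "Fdisp r1 r2 r3 L lr = cot x - (r2 + lr - sqrt ((r1 + lr) * (r3 + lr))) / (sqrt (r2 + lr) * (al + be))"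
    unfolding Fdisp_def al_def be_def Ls[unfolded s_def] ..
  have G': "- (al / s) \<le> (r2 + lr - sqrt ((r1 + lr) * (r3 + lr))) / (sqrt (r2 + lr) * (al + be))"
    using G by (simp only: minus_divide_left)
  have F: "Fdisp r1 r2 r3 L lr < 0" unfolding Fe cotx using G' \<open>al / s \<le> Mb - 1\<close> by linarith
  have "dl < x^2 / L^2"
  proof -
    have "dl \<le> (pi / 2)^2 / (2 * L^2)" using dl by (simp add: power_divide)
    also have "\<dots> < (pi / 2)^2 / L^2" using L2 by (simp add: divide_strict_left_mono)
    also have "\<dots> < x^2 / L^2" using x L2 by (intro divide_strict_right_mono power_strict_mono) auto
    finally show ?thesis .
  qed
  then have "- r2 + dl < lr" unfolding lr_def by simp
  then show ?thesis using F lrb lb by auto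
qed

lemma caseB1:
  assumes r: "r1 > 0" "r2 > 0" "r3 > 0" and L: "L > 0" and rm: "r2 > max r1 r3"
    and B: "- max r1 r3 < pi^2 / L^2 - r2" and ne: "r1 \<noteq> r3" and LL: "L > Lunder r1 r2 r3"
    and ll: "ll < - max r1 r3"
  shows "\<exists>lr. ll < lr \<and> lr < lam_bar r1 r2 r3 L \<and> Fdisp r1 r2 r3 L lr < 0"
proof -
  define M where "M = max r1 r3"
  define D where "D = r2 - M"
  have D: "D > 0" using rm unfolding D_def M_def by simp
  have lb: "lam_bar r1 r2 r3 L = - M" using B unfolding lam_bar_def M_def by simp
  define E where "E = sqrt (- r1 - - M) + sqrt (- r3 - - M)"
  have E: "E = sqrt \<bar>r1 - r3\<bar>" unfolding E_def M_def by (cases "r1 \<le> r3") (auto simp: max_def)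
  have Ep: "E > 0" unfolding E using ne by simp
  have prod: "sqrt ((r1 + - M) * (r3 + - M)) = 0" unfolding M_def by (auto simp: max_def)
  define ka where "ka = sqrt (D / \<bar>r1 - r3\<bar>)"
  have ka: "ka = sqrt D / E" unfolding ka_def E by (simp add: real_sqrt_divide)
  have kap: "ka > 0" unfolding ka_def using D ne by simp
  note ac = arccot_pos[OF kap]
  have sD: "sqrt D > 0" using D by simp
  have "Lunder r1 r2 r3 = 1 / sqrt D * arccot ka"
    unfolding Lunder_def ka_def D_def M_def using ne by simp
  then have "arccot ka / sqrt D < L" using LL by simp
  then have g1: "arccot ka < L * sqrt D" using sD by (simp add: divide_less_eq mult.commute)
  have g2: "L * sqrt D < pi" unfolding D_def using Lsqrt_lt_pi[OF L _ B] rm unfolding M_def by simp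
  have cotl: "cot (L * sqrt D) < ka" using cot_decr[OF ac(2) g1 g2] ac(4) by simp
  have frac: "(r2 + - M - sqrt ((r1 + - M) * (r3 + - M))) / (sqrt (r2 + - M) * E) = sqrt D / E"
  proof -
    have "(r2 + - M - sqrt ((r1 + - M) * (r3 + - M))) / (sqrt (r2 + - M) * E) = D / (sqrt D * E)"
      unfolding prod D_def by simp
    also have "\<dots> = sqrt D / E" using sD Ep D by (simp add: field_simps)
    finally show ?thesis .
  qed
  have FM: "Fdisp r1 r2 r3 L (- M) < 0"
  proof -
    have X: "Fdisp r1 r2 r3 L (- M) = cot (L * sqrt D) - (r2 + - M - sqrt ((r1 + - M) * (r3 + - M))) / (sqrt (r2 + - M) * E)"
      unfolding Fdisp_def E_def D_def by simp
    show ?thesis using X frac cotl ka by linarith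
  qed
  have cont: "isCont (Fdisp r1 r2 r3 L) (- M)"
    by (rule Fdisp_cont[OF L]) (use D g2 Ep in \<open>auto simp: D_def E_def\<close>)
  have "eventually (\<lambda>y. Fdisp r1 r2 r3 L y < 0) (at (- M))"
    using order_tendstoD(2)[OF cont[unfolded isCont_def] FM] .
  then obtain d where d: "d > 0" "\<forall>y. y \<noteq> - M \<and> dist y (- M) < d \<longrightarrow> Fdisp r1 r2 r3 L y < 0"
    unfolding eventually_at by auto
  define m where "m = min d (- M - ll)"
  define lr where "lr = - M - m / 2"
  have llM: "ll < - M" using assms(9) unfolding M_def .
  have mp: "m > 0" using d llM unfolding m_def by simp
  have mle: "m \<le> - M - ll" "m \<le> d" unfolding m_def by simp_all
  have lr1: "ll < lr" using mp mle llM unfolding lr_def by linarith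
  have lr2: "lr < - M" using mp unfolding lr_def by linarith
  note lr = lr1 lr2
  have "dist lr (- M) < d" using mp mle unfolding lr_def dist_real_def by simp
  then have "Fdisp r1 r2 r3 L lr < 0" using d lr by auto
  then show ?thesis using lr lb by auto
qed

lemma caseB2:
  assumes r: "r1 > 0" "r2 > 0" and L: "L > 0" and rm: "r2 > r1"
    and B: "- r1 < pi^2 / L^2 - r2" and dl: "0 < dl" "dl \<le> (r2 - r1) / 4"
  shows "\<exists>lr. - r2 + dl < lr \<and> lr < lam_bar r1 r2 r1 L \<and> Fdisp r1 r2 r1 L lr < 0"
proof -
  define D where "D = r2 - r1"
  have D: "D > 0" using rm unfolding D_def by simp
  have lb: "lam_bar r1 r2 r1 L = - r1" using B unfolding lam_bar_def by simp
  define C0 where "C0 = cot (L * sqrt dl)"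
  define rho where "rho = sqrt D / (4 * (\<bar>C0\<bar> + 1))"
  define ep where "ep = rho^2"
  have rho: "rho > 0" unfolding rho_def using D by (simp add: add_pos_nonneg)
  have ep: "ep > 0" unfolding ep_def using rho by simp
  have "ep = (sqrt D)^2 / (4 * (\<bar>C0\<bar> + 1))^2" unfolding ep_def rho_def by (simp add: power_divide)
  also have "\<dots> = D / (16 * (\<bar>C0\<bar> + 1)^2)" unfolding power_mult_distrib using D by simp
  also have "\<dots> \<le> D / 16"
  proof (rule divide_left_mono)
    have "1 \<le> (\<bar>C0\<bar> + 1)^2" by (simp add: one_le_power)
    then show "16 \<le> 16 * (\<bar>C0\<bar> + 1)^2" by simp
  qed (use D in auto)
  finally have epD: "ep \<le> D / 16" .
  define lr where "lr = - r1 - ep"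
  have lrlt: "lr < - r1" unfolding lr_def using ep by simp
  have lrgt: "- r2 + dl < lr" unfolding lr_def using epD dl unfolding D_def by simp
  define s where "s = sqrt (r2 + lr)"
  have r2lr: "r2 + lr = D - ep" unfolding lr_def D_def by simp
  have "dl \<le> D - ep" using epD dl D unfolding D_def by simp
  then have sdl: "sqrt dl \<le> s" unfolding s_def r2lr by simp
  have sD: "s \<le> sqrt D" unfolding s_def r2lr using ep by simp
  have sp: "s > 0" using sdl dl by (meson less_le_trans real_sqrt_gt_zero)
  have Lpi: "L * s < pi" unfolding s_def
    by (rule Lsqrt_lt_pi[OF L]) (use lrlt B r2lr epD D in auto)
  have cotb: "cot (L * s) \<le> C0" unfolding C0_def
    using cot_mono_le[of "L * sqrt dl" "L * s"] L dl sdl Lpi by (simp add: mult_left_mono)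
  have prod: "sqrt ((r1 + lr) * (r1 + lr)) = ep" unfolding lr_def using ep by simp
  have al: "sqrt (- r1 - lr) = rho" unfolding lr_def ep_def using rho by simp
  have num: "r2 + lr - sqrt ((r1 + lr) * (r1 + lr)) = D - 2 * ep" unfolding prod r2lr by simp
  have "D / 2 / (D / (2 * (\<bar>C0\<bar> + 1))) \<le> (D - 2 * ep) / (s * (rho + rho))"
  proof (rule frac_le)
    show "0 \<le> D - 2 * ep" "D / 2 \<le> D - 2 * ep" using epD D by auto
    show "0 < s * (rho + rho)" using sp rho by simp
    have "s * (rho + rho) \<le> sqrt D * (2 * rho)" using sD rho by (simp add: mult_right_mono)
    also have "\<dots> = 2 * (sqrt D * sqrt D) / (4 * (\<bar>C0\<bar> + 1))" unfolding rho_def by simp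
    also have "\<dots> = D / (2 * (\<bar>C0\<bar> + 1))"
    proof -
      have c4: "4 * \<bar>C0\<bar> + 4 > 0" "2 * \<bar>C0\<bar> + 2 > 0" by auto
      show ?thesis using D c4 by (simp add: field_simps)
    qed
    finally show "s * (rho + rho) \<le> D / (2 * (\<bar>C0\<bar> + 1))" .
  qed
  moreover have "D / 2 / (D / (2 * (\<bar>C0\<bar> + 1))) = \<bar>C0\<bar> + 1" using D by (simp add: field_simps)
  ultimately have fr: "\<bar>C0\<bar> + 1 \<le> (D - 2 * ep) / (s * (rho + rho))" by simp
  have "Fdisp r1 r2 r1 L lr = cot (L * s) - (D - 2 * ep) / (s * (rho + rho))"
    unfolding Fdisp_def num[symmetric] al[symmetric] s_def ..
  then have "Fdisp r1 r2 r1 L lr < 0" using cotb fr by linarith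
  then show ?thesis using lrgt lrlt lb by auto
qed

lemma zero_exists:
  assumes r: "r1 > 0" "r2 > 0" "r3 > 0" and L: "L > 0" and rm: "r2 > max r1 r3"
    and LL: "L > Lunder r1 r2 r3"
  shows "\<exists>lam\<in>{-r2<..<lam_bar r1 r2 r3 L}. Fdisp r1 r2 r3 L lam = 0"
proof -
  define M where "M = max r1 r3"
  define dl where "dl = min ((r2 - M) / 4) (pi^2 / (8 * L^2))"
  have d1: "0 < dl" using rm L unfolding dl_def M_def by simp
  have d2: "dl \<le> (r2 - max r1 r3) / 4" unfolding dl_def M_def by (rule min.cobounded1)
  have d3: "dl \<le> pi^2 / (8 * L^2)" unfolding dl_def M_def by (rule min.cobounded2)
  note dl = d1 d2 d3
  define ll where "ll = - r2 + dl"
  have Fl: "Fdisp r1 r2 r3 L ll > 0" unfolding ll_def by (rule left_point[OF r L rm dl])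
  have llM: "ll < - max r1 r3" using dl rm unfolding ll_def by simp
  obtain lr where lr: "ll < lr" "lr < lam_bar r1 r2 r3 L" "Fdisp r1 r2 r3 L lr < 0"
  proof -
    consider "pi^2 / L^2 - r2 \<le> - max r1 r3" | "- max r1 r3 < pi^2 / L^2 - r2 \<and> r1 \<noteq> r3"
      | "- max r1 r3 < pi^2 / L^2 - r2 \<and> r1 = r3" by linarith
    then show ?thesis
    proof cases
      case 1
      then show ?thesis using caseA[OF r L rm 1 dl(1,3)] that unfolding ll_def by blast
    next
      case 2
      then show ?thesis using caseB1[OF r L rm _ _ LL llM] that by blast
    next
      case 3
      then have e: "r3 = r1" by simp
      have "r2 > r1" "- r1 < pi^2 / L^2 - r2" using 3 rm by auto
      then show ?thesis using caseB2[OF r(1,2) L _ _ dl(1)] dl(2) that e unfolding ll_def by auto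
    qed
  qed
  have cont: "continuous_on {ll..lr} (Fdisp r1 r2 r3 L)"
  proof (intro continuous_at_imp_continuous_on ballI)
    fix x assume x: "x \<in> {ll..lr}"
    then have x1: "- r2 < x" "x < lam_bar r1 r2 r3 L" using lr dl unfolding ll_def by auto
    then have x2: "x < - r1" "x < pi^2 / L^2 - r2" "x < - r3" unfolding lam_bar_def by auto
    show "isCont (Fdisp r1 r2 r3 L) x"
    proof (rule Fdisp_cont[OF L])
      show "r2 + x > 0" using x1 by simp
      show "L * sqrt (r2 + x) < pi" using Lsqrt_lt_pi[OF L _ x2(2)] x1 by simp
      have "sqrt (- r1 - x) > 0" using x2 by simp
      moreover have "sqrt (- r3 - x) \<ge> 0" using x2(3) by simp
      ultimately show "sqrt (- r1 - x) + sqrt (- r3 - x) \<noteq> 0" by linarith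
    qed
  qed
  obtain z where z: "ll \<le> z" "z \<le> lr" "Fdisp r1 r2 r3 L z = 0"
    using IVT2'[of "Fdisp r1 r2 r3 L" lr 0 ll] lr Fl cont by auto
  have "z \<in> {-r2<..<lam_bar r1 r2 r3 L}" using z lr dl unfolding ll_def by auto
  then show ?thesis using z by blast
qed

theorem lemma3p2:
  fixes r1 r2 r3 L :: real
  assumes "r1 > 0" "r2 > 0" "r3 > 0" "L > 0" "r2 > max r1 r3"
  shows "(L \<le> Lunder r1 r2 r3 \<longrightarrow> gen_princ_eig L (mcoef r1 r2 r3) = - max r1 r3) \<and>
         (L > Lunder r1 r2 r3 \<longrightarrow>
            (gen_princ_eig L (mcoef r1 r2 r3) \<in> {-r2<..<lam_bar r1 r2 r3 L} \<and>
             Fdisp r1 r2 r3 L (gen_princ_eig L (mcoef r1 r2 r3)) = 0 \<and>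
             (\<forall>lam\<in>{-r2<..<lam_bar r1 r2 r3 L}. Fdisp r1 r2 r3 L lam = 0 \<longrightarrow>
                lam = gen_princ_eig L (mcoef r1 r2 r3))))"
proof (intro conjI impI)
  assume "L \<le> Lunder r1 r2 r3"
  then show "gen_princ_eig L (mcoef r1 r2 r3) = - max r1 r3" using case_i assms by blast
next
  assume LL: "L > Lunder r1 r2 r3"
  obtain l0 where l0: "l0 \<in> {-r2<..<lam_bar r1 r2 r3 L}" "Fdisp r1 r2 r3 L l0 = 0"
    using zero_exists[OF assms LL] by blast
  have g: "gen_princ_eig L (mcoef r1 r2 r3) = l0" using eig_sup[OF assms l0] .
  show "gen_princ_eig L (mcoef r1 r2 r3) \<in> {-r2<..<lam_bar r1 r2 r3 L}" using g l0 by simp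
  show "Fdisp r1 r2 r3 L (gen_princ_eig L (mcoef r1 r2 r3)) = 0" using g l0 by simp
  show "\<forall>lam\<in>{-r2<..<lam_bar r1 r2 r3 L}. Fdisp r1 r2 r3 L lam = 0 \<longrightarrow> lam = gen_princ_eig L (mcoef r1 r2 r3)"
    using eig_sup[OF assms] by auto
qed


end
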